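(* Let $t\mapsto U_t$ be a $\|\cdot\|_p$-continuous path in $\mathcal U_p(\mathcal H)$ such that every Cayley transform $C(U_t)$ is densely defined on the whole of $\mathcal H$ (i.e. $\overline{(U_t-\mathrm{Id})\mathcal H}=\mathcal H$). Then $t\mapsto C(U_t)$ is $p$-norm resolvent continuous: $\|(C(U_t)-\lambda)^{-1}-(C(U_s)-\lambda)^{-1}\|_p\to0$ as $t\to s$, for all $\lambda\notin\mathrm{spec}(C(U_s))$.
   Context: $\mathcal H$ separable Hilbert space; $\mathcal L^p$ Schatten class with norm $\|\cdot\|_p$; $\mathcal U_p(\mathcal H)$ the unitaries $U$ with $U-\mathrm{Id}\in\mathcal L^p$. The Cayley transform of a unitary $U$ is $C(U)=i(U+\mathrm{Id})(U-\mathrm{Id})^{-1}$ with domain $(U-\mathrm{Id})\mathcal H$, a self-adjoint operator on $\overline{(U-\mathrm{Id})\mathcal H}$. *)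

theory Defs
  imports "HOL-Analysis.Analysis"
begin

text \<open>The separable Hilbert space is modelled as l2(I) for a countable index type 'i
  (every separable Hilbert space is unitarily equivalent to one of these).
  Vectors are functions 'i => complex; operators are functions on them, only
  their behaviour on l2 matters.\<close>

type_synonym 'i vec = "'i \<Rightarrow> complex"
type_synonym 'i op = "'i vec \<Rightarrow> 'i vec"

definition l2 :: "('i::countable) vec set" where
  "l2 = {f. (\<lambda>i. (cmod (f i))\<^sup>2) summable_on UNIV}"

definition l2norm :: "('i::countable) vec \<Rightarrow> real" where
  "l2norm f = sqrt (infsum (\<lambda>i. (cmod (f i))\<^sup>2) UNIV)"

definition vadd :: "'i vec \<Rightarrow> 'i vec \<Rightarrow> 'i vec" where
  "vadd f g = (\<lambda>i. f i + g i)"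

definition vsub :: "'i vec \<Rightarrow> 'i vec \<Rightarrow> 'i vec" where
  "vsub f g = (\<lambda>i. f i - g i)"

definition vsmult :: "complex \<Rightarrow> 'i vec \<Rightarrow> 'i vec" where
  "vsmult c f = (\<lambda>i. c * f i)"

definition op_sub :: "'i op \<Rightarrow> 'i op \<Rightarrow> 'i op" where
  "op_sub S T = (\<lambda>f. vsub (S f) (T f))"

definition bounded_op :: "('i::countable) op \<Rightarrow> bool" where
  "bounded_op T \<longleftrightarrow>
     (\<forall>f\<in>l2. T f \<in> l2) \<and>
     (\<forall>f\<in>l2. \<forall>g\<in>l2. T (vadd f g) = vadd (T f) (T g)) \<and>
     (\<forall>f\<in>l2. \<forall>c. T (vsmult c f) = vsmult c (T f)) \<and>
     (\<exists>K. \<forall>f\<in>l2. l2norm (T f) \<le> K * l2norm f)"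

definition opnorm :: "('i::countable) op \<Rightarrow> real" where
  "opnorm T = Sup {l2norm (T f) | f. f \<in> l2 \<and> l2norm f \<le> 1}"

definition rank_le :: "('i::countable) op \<Rightarrow> nat \<Rightarrow> bool" where
  "rank_le F n \<longleftrightarrow> (\<exists>v :: nat \<Rightarrow> 'i vec. (\<forall>k<n. v k \<in> l2) \<and>
      (\<forall>f\<in>l2. \<exists>c :: nat \<Rightarrow> complex. F f = (\<lambda>i. \<Sum>k<n. c k * v k i)))"

text \<open>n-th singular value (approximation number), n = 0, 1, 2, ...\<close>
definition sing_val :: "('i::countable) op \<Rightarrow> nat \<Rightarrow> real" where
  "sing_val T n = Inf {opnorm (op_sub T F) | F. bounded_op F \<and> rank_le F n}"

definition schatten :: "real \<Rightarrow> ('i::countable) op \<Rightarrow> bool" where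
  "schatten p T \<longleftrightarrow> bounded_op T \<and> summable (\<lambda>n. sing_val T n powr p)"

definition snorm :: "real \<Rightarrow> ('i::countable) op \<Rightarrow> real" where
  "snorm p T = (\<Sum>n. sing_val T n powr p) powr (1 / p)"

definition unitary_op :: "('i::countable) op \<Rightarrow> bool" where
  "unitary_op U \<longleftrightarrow> bounded_op U \<and> (\<forall>f\<in>l2. l2norm (U f) = l2norm f) \<and> U ` l2 = l2"

definition U_p :: "real \<Rightarrow> ('i::countable) op set" where
  "U_p p = {U. unitary_op U \<and> schatten p (op_sub U id)}"

text \<open>Cayley transform C(U) = i(U+Id)(U-Id)^{-1}, with domain (U-Id)H.\<close>
definition cayley_dom :: "('i::countable) op \<Rightarrow> 'i vec set" where
  "cayley_dom U = (\<lambda>x. vsub (U x) x) ` l2"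

definition cayley :: "('i::countable) op \<Rightarrow> 'i op" where
  "cayley U y = (let x = (THE x. x \<in> l2 \<and> vsub (U x) x = y) in vsmult \<i> (vadd (U x) x))"

definition dense_in_l2 :: "('i::countable) vec set \<Rightarrow> bool" where
  "dense_in_l2 D \<longleftrightarrow> (\<forall>f\<in>l2. \<forall>e>0. \<exists>g\<in>D. l2norm (vsub f g) < e)"

definition cayley_resolvent :: "('i::countable) op \<Rightarrow> complex \<Rightarrow> 'i op" where
  "cayley_resolvent U z y =
     (THE x. x \<in> cayley_dom U \<and> vsub (cayley U x) (vsmult z x) = y)"

definition cayley_resolvent_set :: "('i::countable) op \<Rightarrow> complex set" where
  "cayley_resolvent_set U = {z.
     bij_betw (\<lambda>x. vsub (cayley U x) (vsmult z x)) (cayley_dom U) l2 \<and>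
     bounded_op (cayley_resolvent U z)}"

definition cayley_spec :: "('i::countable) op \<Rightarrow> complex set" where
  "cayley_spec U = - cayley_resolvent_set U"

end

theory Submission
  imports Defs "HOL-Analysis.Analysis"
begin
lemma real_sum_cmp:
  fixes f g :: "'a \<Rightarrow> real"
  assumes "g summable_on UNIV" "\<And>i. \<bar>f i\<bar> \<le> g i"
  shows "f summable_on UNIV"
proof -
  have "(\<lambda>x. norm (g x)) summable_on UNIV"
    using assms by (subst summable_on_cong[where g=g]) (auto intro: abs_of_nonneg order_trans[OF abs_ge_zero])
  then have "(\<lambda>x. norm (f x)) summable_on UNIV"
    by (rule Infinite_Sum.abs_summable_on_comparison_test) (use assms in \<open>force intro: order_trans[OF _ abs_ge_self]\<close>)
  then show ?thesis using summable_on_iff_abs_summable_on_real by blast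
qed

lemma l2_zero[simp]: "(\<lambda>i. 0) \<in> l2"
  by (simp add: l2_def)

lemma sq_help: "(x+y)^2 \<le> 2*x^2 + 2*(y::real)^2"
proof -
  have "0 \<le> (x-y)^2" by simp
  then show ?thesis by (simp add: power2_eq_square algebra_simps)
qed

lemma prod_help: "0 \<le> x \<Longrightarrow> 0 \<le> y \<Longrightarrow> x * y \<le> x^2 + (y::real)^2"
proof -
  assume "0 \<le> x" "0 \<le> y"
  then have "0 \<le> x*y" by simp
  have "0 \<le> (x-y)^2" by simp
  then show ?thesis using \<open>0 \<le> x*y\<close> by (simp add: power2_eq_square algebra_simps)
qed

lemma cmod_add_sq: "(cmod (a + b))\<^sup>2 \<le> 2 * (cmod a)\<^sup>2 + 2 * (cmod b)\<^sup>2"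
proof -
  have "cmod (a+b) \<le> cmod a + cmod b" by (rule norm_triangle_ineq)
  then have "(cmod (a+b))\<^sup>2 \<le> (cmod a + cmod b)\<^sup>2"
    by (simp add: power_mono)
  also have "\<dots> \<le> 2 * (cmod a)\<^sup>2 + 2 * (cmod b)\<^sup>2"
    using sq_help[of "cmod a" "cmod b"] .
  finally show ?thesis .
qed

lemma l2_add: "f \<in> l2 \<Longrightarrow> g \<in> l2 \<Longrightarrow> (\<lambda>i. f i + g i) \<in> l2"
  unfolding l2_def
proof safe
  assume f: "(\<lambda>i. (cmod (f i))\<^sup>2) summable_on UNIV" and g: "(\<lambda>i. (cmod (g i))\<^sup>2) summable_on UNIV"
  have "(\<lambda>i. 2 * (cmod (f i))\<^sup>2 + 2 * (cmod (g i))\<^sup>2) summable_on UNIV"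
    by (intro summable_on_add summable_on_cmult_right f g)
  then show "(\<lambda>i. (cmod (f i + g i))\<^sup>2) summable_on UNIV"
    by (rule real_sum_cmp) (simp add: cmod_add_sq)
qed

lemma l2_smult: "f \<in> l2 \<Longrightarrow> (\<lambda>i. c * f i) \<in> l2"
  unfolding l2_def
proof safe
  assume f: "(\<lambda>i. (cmod (f i))\<^sup>2) summable_on UNIV"
  have "(\<lambda>i. (cmod c)\<^sup>2 * (cmod (f i))\<^sup>2) summable_on UNIV"
    by (intro summable_on_cmult_right f)
  then show "(\<lambda>i. (cmod (c * f i))\<^sup>2) summable_on UNIV"
    by (simp add: norm_mult power_mult_distrib)
qed

lemma l2_uminus: "f \<in> l2 \<Longrightarrow> (\<lambda>i. - f i) \<in> l2"
  using l2_smult[of f "-1"] by simp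

lemma l2_diff: "f \<in> l2 \<Longrightarrow> g \<in> l2 \<Longrightarrow> (\<lambda>i. f i - g i) \<in> l2"
  using l2_add[of f "\<lambda>i. - g i"] l2_uminus[of g] by simp

lemma vadd_l2[simp]: "f \<in> l2 \<Longrightarrow> g \<in> l2 \<Longrightarrow> vadd f g \<in> l2"
  by (simp add: vadd_def l2_add)
lemma vsub_l2[simp]: "f \<in> l2 \<Longrightarrow> g \<in> l2 \<Longrightarrow> vsub f g \<in> l2"
  by (simp add: vsub_def l2_diff)
lemma vsmult_l2[simp]: "f \<in> l2 \<Longrightarrow> vsmult c f \<in> l2"
  by (simp add: vsmult_def l2_smult)

lemma l2_prod_summable:
  assumes "f \<in> l2" "g \<in> l2"
  shows "(\<lambda>i. Re (f i * cnj (g i))) summable_on UNIV"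
proof -
  have f: "(\<lambda>i. (cmod (f i))\<^sup>2) summable_on UNIV" and g: "(\<lambda>i. (cmod (g i))\<^sup>2) summable_on UNIV"
    using assms by (auto simp: l2_def)
  have "(\<lambda>i. (cmod (f i))\<^sup>2 + (cmod (g i))\<^sup>2) summable_on UNIV"
    by (intro summable_on_add f g)
  then show ?thesis
  proof (rule real_sum_cmp)
    fix i
    have "\<bar>Re (f i * cnj (g i))\<bar> \<le> cmod (f i * cnj (g i))" by (rule abs_Re_le_cmod)
    also have "\<dots> = cmod (f i) * cmod (g i)" by (simp add: norm_mult)
    also have "\<dots> \<le> (cmod (f i))\<^sup>2 + (cmod (g i))\<^sup>2"
      by (rule prod_help) auto
    finally show "\<bar>Re (f i * cnj (g i))\<bar> \<le> (cmod (f i))\<^sup>2 + (cmod (g i))\<^sup>2" .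
  qed
qed

typedef ('i::countable) l2t = "l2 :: 'i vec set"
  morphisms vec_of Abs_l2t
  by (rule exI[of _ "\<lambda>i. 0"]) simp

setup_lifting type_definition_l2t

lemma Re_mult_cnj: "Re (z * cnj z) = (cmod z)\<^sup>2"
  using complex_norm_square[of z] by (metis Re_complex_of_real)

lemma l2_sq_summable: "f \<in> l2 \<Longrightarrow> (\<lambda>i. (cmod (f i))\<^sup>2) summable_on UNIV"
  by (simp add: l2_def)

instantiation l2t :: (countable) real_inner
begin

lift_definition zero_l2t :: "'a l2t" is "\<lambda>i. 0" by simp
lift_definition plus_l2t :: "'a l2t \<Rightarrow> 'a l2t \<Rightarrow> 'a l2t" is "\<lambda>f g i. f i + g i" by (rule l2_add)
lift_definition minus_l2t :: "'a l2t \<Rightarrow> 'a l2t \<Rightarrow> 'a l2t" is "\<lambda>f g i. f i - g i" by (rule l2_diff)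
lift_definition uminus_l2t :: "'a l2t \<Rightarrow> 'a l2t" is "\<lambda>f i. - f i" by (rule l2_uminus)
lift_definition scaleR_l2t :: "real \<Rightarrow> 'a l2t \<Rightarrow> 'a l2t" is "\<lambda>r f i. of_real r * f i" by (rule l2_smult)
lift_definition norm_l2t :: "'a l2t \<Rightarrow> real" is l2norm .
lift_definition inner_l2t :: "'a l2t \<Rightarrow> 'a l2t \<Rightarrow> real" is "\<lambda>f g. infsum (\<lambda>i. Re (f i * cnj (g i))) UNIV" .
definition sgn_l2t :: "'a l2t \<Rightarrow> 'a l2t" where "sgn_l2t x = Abs_l2t (\<lambda>i. of_real (inverse (l2norm (vec_of x))) * vec_of x i)"
definition dist_l2t :: "'a l2t \<Rightarrow> 'a l2t \<Rightarrow> real" where "dist_l2t x y = l2norm (\<lambda>i. vec_of x i - vec_of y i)"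
definition uniformity_l2t :: "('a l2t \<times> 'a l2t) filter" where
  "uniformity_l2t = (INF e\<in>{0<..}. principal {(x, y). l2norm (\<lambda>i. vec_of x i - vec_of y i) < e})"
definition open_l2t :: "'a l2t set \<Rightarrow> bool" where
  "open_l2t U = (\<forall>x\<in>U. \<forall>\<^sub>F (x', y) in (uniformity :: ('a l2t \<times> 'a l2t) filter). x' = x \<longrightarrow> y \<in> U)"

instance
proof
  fix x y z :: "'a l2t" and a b :: real
  show "x + y + z = x + (y + z)" by transfer (simp add: algebra_simps)
  show "x + y = y + x" by transfer (simp add: algebra_simps)
  show "0 + x = x" by transfer simp
  show "- x + x = 0" by transfer simp
  show "x - y = x + - y" by transfer simp
  show "a *\<^sub>R (x + y) = a *\<^sub>R x + a *\<^sub>R y" by transfer (simp add: algebra_simps)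
  show "(a + b) *\<^sub>R x = a *\<^sub>R x + b *\<^sub>R x" by transfer (simp add: algebra_simps)
  show "a *\<^sub>R b *\<^sub>R x = (a * b) *\<^sub>R x" by transfer (simp add: algebra_simps)
  show "1 *\<^sub>R x = x" by transfer simp
  show "sgn x = inverse (norm x) *\<^sub>R x"
    by (simp add: vec_of_inject[symmetric] sgn_l2t_def scaleR_l2t.rep_eq norm_l2t.rep_eq Abs_l2t_inverse l2_smult vec_of[simplified])
  show "dist x y = norm (x - y)" by (simp add: dist_l2t_def norm_l2t.rep_eq minus_l2t.rep_eq)
  show "inner x y = inner y x"
    by transfer (simp add: mult.commute)
  show "inner (x + y) z = inner x z + inner y z"
  proof transfer
    fix f g h :: "'a vec" assume "f \<in> l2" "g \<in> l2" "h \<in> l2"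
    then show "(\<Sum>\<^sub>\<infinity>i. Re ((f i + g i) * cnj (h i))) = (\<Sum>\<^sub>\<infinity>i. Re (f i * cnj (h i))) + (\<Sum>\<^sub>\<infinity>i. Re (g i * cnj (h i)))"
    proof -
      have e: "(\<lambda>i. Re ((f i + g i) * cnj (h i))) = (\<lambda>i. Re (f i * cnj (h i)) + Re (g i * cnj (h i)))"
        by (rule ext) (simp only: distrib_right plus_complex.sel)
      show ?thesis unfolding e
        by (rule infsum_add; rule l2_prod_summable) fact+
    qed
  qed
  show "inner (a *\<^sub>R x) y = a * inner x y"
  proof transfer
    fix f g :: "'a vec" and a :: real
    have "(\<Sum>\<^sub>\<infinity>i. Re (complex_of_real a * f i * cnj (g i))) = (\<Sum>\<^sub>\<infinity>i. a * Re (f i * cnj (g i)))"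
      by (simp add: mult.assoc)
    also have "\<dots> = a * (\<Sum>\<^sub>\<infinity>i. Re (f i * cnj (g i)))" by (rule infsum_cmult_right')
    finally show "(\<Sum>\<^sub>\<infinity>i. Re (complex_of_real a * f i * cnj (g i))) = a * (\<Sum>\<^sub>\<infinity>i. Re (f i * cnj (g i)))" .
  qed
  show "0 \<le> inner x x"
    by transfer (simp only: Re_mult_cnj, simp add: infsum_nonneg)
  show "(inner x x = 0) = (x = 0)"
  proof transfer
    fix f :: "'a vec" assume f: "f \<in> l2"
    show "((\<Sum>\<^sub>\<infinity>i. Re (f i * cnj (f i))) = 0) = (f = (\<lambda>i. 0))"
    proof
      assume "(\<Sum>\<^sub>\<infinity>i. Re (f i * cnj (f i))) = 0"
      moreover have "(\<lambda>i. Re (f i * cnj (f i))) = (\<lambda>i. (cmod (f i))\<^sup>2)"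
        by (rule ext, rule Re_mult_cnj)
      ultimately have "(\<Sum>\<^sub>\<infinity>i. (cmod (f i))\<^sup>2) \<le> 0" by simp
      then have "(cmod (f i))\<^sup>2 = 0" for i
        by (rule nonneg_infsum_le_0D) (use f in \<open>auto simp: l2_def\<close>)
      then show "f = (\<lambda>i. 0)" by auto
    qed simp
  qed
  show "norm x = sqrt (inner x x)"
    by transfer (simp only: Re_mult_cnj l2norm_def)
qed (simp_all add: uniformity_l2t_def open_l2t_def dist_l2t_def)

end

lemma norm_Abs: "f \<in> l2 \<Longrightarrow> norm (Abs_l2t f) = l2norm f"
  by (simp add: norm_l2t.rep_eq Abs_l2t_inverse)

lemma vec_of_in[simp]: "vec_of x \<in> l2"
  using vec_of by blast

lemma l2norm_nonneg: "0 \<le> l2norm f"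
  by (simp add: l2norm_def infsum_nonneg)

lemma l2norm_triangle: "f \<in> l2 \<Longrightarrow> g \<in> l2 \<Longrightarrow> l2norm (vadd f g) \<le> l2norm f + l2norm g"
proof -
  assume f: "f \<in> l2" and g: "g \<in> l2"
  have "vadd f g = vec_of (Abs_l2t f + Abs_l2t g)"
    using f g by (simp add: plus_l2t.rep_eq Abs_l2t_inverse vadd_def)
  then have "l2norm (vadd f g) = norm (Abs_l2t f + Abs_l2t g)"
    by (simp add: norm_l2t.rep_eq)
  also have "\<dots> \<le> norm (Abs_l2t f) + norm (Abs_l2t g)" by (rule norm_triangle_ineq)
  finally show ?thesis using f g by (simp add: norm_Abs)
qed

lemma l2norm_smult: "l2norm (vsmult c f) = cmod c * l2norm f"
proof -
  have "(\<Sum>\<^sub>\<infinity>i. (cmod (c * f i))\<^sup>2) = (\<Sum>\<^sub>\<infinity>i. (cmod c)\<^sup>2 * (cmod (f i))\<^sup>2)"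
    by (simp add: norm_mult power_mult_distrib)
  also have "\<dots> = (cmod c)\<^sup>2 * (\<Sum>\<^sub>\<infinity>i. (cmod (f i))\<^sup>2)" by (rule infsum_cmult_right')
  finally show ?thesis
    by (simp add: l2norm_def vsmult_def real_sqrt_mult)
qed

lemma l2norm_zero_iff: "f \<in> l2 \<Longrightarrow> l2norm f = 0 \<longleftrightarrow> f = (\<lambda>i. 0)"
proof -
  assume f: "f \<in> l2"
  have "l2norm f = norm (Abs_l2t f)" using f by (simp add: norm_Abs)
  also have "\<dots> = 0 \<longleftrightarrow> Abs_l2t f = 0" by simp
  also have "\<dots> \<longleftrightarrow> vec_of (Abs_l2t f) = vec_of 0" by (simp only: vec_of_inject)
  also have "\<dots> \<longleftrightarrow> f = (\<lambda>i. 0)"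
    using f by (simp add: Abs_l2t_inverse zero_l2t.rep_eq)
  finally show ?thesis .
qed

lemma l2norm_zero[simp]: "l2norm (\<lambda>i. 0) = 0"
  by (simp add: l2norm_def infsum_nonneg)

lemma finite_sq_le: "f \<in> l2 \<Longrightarrow> finite F \<Longrightarrow> (\<Sum>i\<in>F. (cmod (f i))\<^sup>2) \<le> (l2norm f)\<^sup>2"
proof -
  assume f: "f \<in> l2" and F: "finite F"
  have "(\<Sum>i\<in>F. (cmod (f i))\<^sup>2) \<le> (\<Sum>\<^sub>\<infinity>i. (cmod (f i))\<^sup>2)"
    by (rule finite_sum_le_infsum) (use f F in \<open>auto simp: l2_def\<close>)
  also have "\<dots> = (l2norm f)\<^sup>2"
    by (simp add: l2norm_def infsum_nonneg)
  finally show ?thesis .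
qed

lemma coord_le: "f \<in> l2 \<Longrightarrow> cmod (f i) \<le> l2norm f"
proof -
  assume f: "f \<in> l2"
  have "(cmod (f i))\<^sup>2 \<le> (l2norm f)\<^sup>2" using finite_sq_le[OF f, of "{i}"] by simp
  then show ?thesis using l2norm_nonneg[of f] by (rule power2_le_imp_le)
qed

instance l2t :: (countable) complete_space
proof
  fix X :: "nat \<Rightarrow> 'a l2t" assume C: "Cauchy X"
  define x where "x n = vec_of (X n)" for n
  have dist_eq: "dist (X n) (X m) = l2norm (\<lambda>i. x n i - x m i)" for n m
    by (simp add: dist_norm x_def norm_l2t.rep_eq minus_l2t.rep_eq)
  have Cx: "Cauchy (\<lambda>n. x n i)" for i
  proof (rule metric_CauchyI)
    fix e :: real assume "0 < e"
    then obtain N where N: "\<forall>m\<ge>N. \<forall>n\<ge>N. dist (X m) (X n) < e" using C metric_CauchyD by blast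
    show "\<exists>M. \<forall>m\<ge>M. \<forall>n\<ge>M. dist (x m i) (x n i) < e"
    proof (intro exI allI impI)
      fix m n assume "N \<le> m" "N \<le> n"
      have "dist (x m i) (x n i) = cmod ((\<lambda>i. x m i - x n i) i)" by (simp add: dist_norm)
      also have "\<dots> \<le> l2norm (\<lambda>i. x m i - x n i)"
        by (rule coord_le) (simp add: x_def l2_diff)
      also have "\<dots> < e" using N \<open>N \<le> m\<close> \<open>N \<le> n\<close> dist_eq by metis
      finally show "dist (x m i) (x n i) < e" .
    qed
  qed
  define L where "L i = lim (\<lambda>n. x n i)" for i
  have L: "\<And>i. (\<lambda>n. x n i) \<longlonglongrightarrow> L i"
    unfolding L_def using Cx by (simp add: Cauchy_convergent_iff convergent_LIMSEQ_iff)
  have main: "\<exists>N. \<forall>n\<ge>N. (\<lambda>i. x n i - L i) \<in> l2 \<and> l2norm (\<lambda>i. x n i - L i) \<le> e" if "e > 0" for e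
  proof -
    obtain N where N: "\<forall>m\<ge>N. \<forall>n\<ge>N. dist (X m) (X n) < e" using C metric_CauchyD \<open>e>0\<close> by blast
    show ?thesis
    proof (intro exI allI impI conjI)
      fix n assume n: "N \<le> n"
      have fin: "(\<Sum>i\<in>F. (cmod (x n i - L i))\<^sup>2) \<le> e\<^sup>2" if F: "finite F" for F
      proof -
        have lim: "(\<lambda>m. \<Sum>i\<in>F. (cmod (x n i - x m i))\<^sup>2) \<longlonglongrightarrow> (\<Sum>i\<in>F. (cmod (x n i - L i))\<^sup>2)"
          by (intro tendsto_intros L)
        have "\<forall>\<^sub>F m in sequentially. (\<Sum>i\<in>F. (cmod (x n i - x m i))\<^sup>2) \<le> e\<^sup>2"
        proof (rule eventually_sequentiallyI[of N])
          fix m assume m: "N \<le> m"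
          have "(\<Sum>i\<in>F. (cmod (x n i - x m i))\<^sup>2) \<le> (l2norm (\<lambda>i. x n i - x m i))\<^sup>2"
            by (rule finite_sq_le) (simp_all add: F x_def l2_diff)
          also have "\<dots> \<le> e\<^sup>2"
          proof -
            have "l2norm (\<lambda>i. x n i - x m i) < e" using N n m dist_eq[of n m] by (metis)
            then show ?thesis by (intro power_mono) (auto simp: l2norm_nonneg)
          qed
          finally show "(\<Sum>i\<in>F. (cmod (x n i - x m i))\<^sup>2) \<le> e\<^sup>2" .
        qed
        then show ?thesis using lim by (intro tendsto_upperbound) auto
      qed
      have summ: "(\<lambda>i. (cmod (x n i - L i))\<^sup>2) summable_on UNIV"
        by (rule nonneg_bdd_above_summable_on) (auto intro!: bdd_aboveI2 fin)
      then show "(\<lambda>i. x n i - L i) \<in> l2" by (simp add: l2_def)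
      have "(\<Sum>\<^sub>\<infinity>i. (cmod (x n i - L i))\<^sup>2) \<le> e\<^sup>2"
        by (rule infsum_le_finite_sums[OF summ]) (rule fin)
      then have "l2norm (\<lambda>i. x n i - L i) \<le> sqrt (e\<^sup>2)"
        unfolding l2norm_def by (rule real_sqrt_le_mono)
      then show "l2norm (\<lambda>i. x n i - L i) \<le> e" using \<open>e > 0\<close> by simp
    qed
  qed
  obtain N0 where N0: "(\<lambda>i. x N0 i - L i) \<in> l2" using main[of 1] by auto
  have Ll2: "L \<in> l2"
    using l2_diff[OF _ N0, of "x N0"] by (simp add: x_def)
  have "X \<longlonglongrightarrow> Abs_l2t L"
  proof (rule metric_LIMSEQ_I)
    fix e :: real assume "0 < e"
    then obtain N where N: "\<forall>n\<ge>N. (\<lambda>i. x n i - L i) \<in> l2 \<and> l2norm (\<lambda>i. x n i - L i) \<le> e/2"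
      using main[of "e/2"] by auto
    show "\<exists>N. \<forall>n\<ge>N. dist (X n) (Abs_l2t L) < e"
    proof (intro exI allI impI)
      fix n assume "N \<le> n"
      have "dist (X n) (Abs_l2t L) = l2norm (\<lambda>i. x n i - L i)"
        using Ll2 by (simp add: dist_norm norm_l2t.rep_eq minus_l2t.rep_eq Abs_l2t_inverse x_def)
      also have "\<dots> \<le> e/2" using N \<open>N \<le> n\<close> by blast
      finally show "dist (X n) (Abs_l2t L) < e" using \<open>0<e\<close> by simp
    qed
  qed
  then show "convergent X" by (rule convergentI)
qed

lemma vadd_apply[simp]: "vadd f g i = f i + g i" by (simp add: vadd_def)
lemma vsub_apply[simp]: "vsub f g i = f i - g i" by (simp add: vsub_def)
lemma vsmult_apply[simp]: "vsmult c f i = c * f i" by (simp add: vsmult_def)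
lemma op_sub_apply[simp]: "op_sub S T f = vsub (S f) (T f)" by (simp add: op_sub_def)

lemma l2_vsub_alt: "f \<in> l2 \<Longrightarrow> g \<in> l2 \<Longrightarrow> (\<lambda>i. f i - g i) \<in> l2" by (rule l2_diff)

definition lin :: "('i::countable) op \<Rightarrow> bool" where
  "lin T \<longleftrightarrow> (\<forall>f\<in>l2. T f \<in> l2) \<and>
     (\<forall>f\<in>l2. \<forall>g\<in>l2. T (vadd f g) = vadd (T f) (T g)) \<and>
     (\<forall>f\<in>l2. \<forall>c. T (vsmult c f) = vsmult c (T f))"

lemma bounded_op_iff: "bounded_op T \<longleftrightarrow> lin T \<and> (\<exists>K. \<forall>f\<in>l2. l2norm (T f) \<le> K * l2norm f)"
  by (simp add: bounded_op_def lin_def)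

lemma lin_l2: "lin T \<Longrightarrow> f \<in> l2 \<Longrightarrow> T f \<in> l2" by (simp add: lin_def)
lemma lin_add: "lin T \<Longrightarrow> f \<in> l2 \<Longrightarrow> g \<in> l2 \<Longrightarrow> T (vadd f g) = vadd (T f) (T g)" by (simp add: lin_def)
lemma lin_smult: "lin T \<Longrightarrow> f \<in> l2 \<Longrightarrow> T (vsmult c f) = vsmult c (T f)" by (simp add: lin_def)

lemma vsub_as: "vsub f g = vadd f (vsmult (-1) g)" by (simp add: fun_eq_iff)

lemma lin_sub: "lin T \<Longrightarrow> f \<in> l2 \<Longrightarrow> g \<in> l2 \<Longrightarrow> T (vsub f g) = vsub (T f) (T g)"
proof -
  assume T: "lin T" and f: "f \<in> l2" and g: "g \<in> l2"
  have "T (vsub f g) = T (vadd f (vsmult (-1) g))" by (simp only: vsub_as)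
  also have "\<dots> = vadd (T f) (vsmult (-1) (T g))"
    using T f g by (simp only: lin_add vsmult_l2 lin_smult)
  finally show ?thesis by (simp add: fun_eq_iff)
qed

lemma zero_as: "(\<lambda>i. 0) = vsmult 0 (\<lambda>i. 0 :: complex)" by (simp add: fun_eq_iff)

lemma lin_zero: "lin T \<Longrightarrow> T (\<lambda>i. 0) = (\<lambda>i. 0)"
  by (subst zero_as, simp only: lin_smult[OF _ l2_zero]) (simp add: fun_eq_iff)

lemma bounded_lin: "bounded_op T \<Longrightarrow> lin T" by (simp add: bounded_op_iff)

lemma bounded_bound: "bounded_op T \<Longrightarrow> \<exists>K\<ge>0. \<forall>f\<in>l2. l2norm (T f) \<le> K * l2norm f"
proof -
  assume "bounded_op T"
  then obtain K where K: "\<forall>f\<in>l2. l2norm (T f) \<le> K * l2norm f" by (auto simp: bounded_op_iff)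
  have "\<forall>f\<in>l2. l2norm (T f) \<le> max K 0 * l2norm f"
    using K by (metis l2norm_nonneg max.cobounded1 mult_right_mono order_trans)
  then show ?thesis by (intro exI[of _ "max K 0"]) auto
qed

lemma l2norm_sub_le: "f \<in> l2 \<Longrightarrow> g \<in> l2 \<Longrightarrow> l2norm (vsub f g) \<le> l2norm f + l2norm g"
  using l2norm_triangle[of f "vsmult (-1) g"] by (simp add: vsub_as l2norm_smult)

lemma l2norm_sub_ge: "f \<in> l2 \<Longrightarrow> g \<in> l2 \<Longrightarrow> l2norm f - l2norm g \<le> l2norm (vsub f g)"
proof -
  assume f: "f \<in> l2" and g: "g \<in> l2"
  have "f = vadd (vsub f g) g" by (simp add: fun_eq_iff)
  then have "l2norm f \<le> l2norm (vsub f g) + l2norm g"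
    using l2norm_triangle[of "vsub f g" g] f g by simp
  then show ?thesis by simp
qed

lemma l2norm_eq0: "f \<in> l2 \<Longrightarrow> l2norm f = 0 \<Longrightarrow> f = (\<lambda>i. 0)"
  using l2norm_zero_iff by blast

subsection \<open>Operator norm\<close>

lemma opnorm_least:
  assumes "\<forall>f\<in>l2. l2norm (T f) \<le> K * l2norm f" "0 \<le> K"
  shows "opnorm T \<le> K"
  unfolding opnorm_def
proof (rule cSup_least)
  show "{l2norm (T f) |f. f \<in> l2 \<and> l2norm f \<le> 1} \<noteq> {}"
  proof -
    have "l2norm (T (\<lambda>i. 0)) \<in> {l2norm (T f) |f. f \<in> l2 \<and> l2norm f \<le> 1}" by auto
    then show ?thesis by blast
  qed
  fix x assume "x \<in> {l2norm (T f) |f. f \<in> l2 \<and> l2norm f \<le> 1}"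
  then obtain f where f: "f \<in> l2" "l2norm f \<le> 1" and x: "x = l2norm (T f)" by auto
  have "x \<le> K * l2norm f" using assms f x by auto
  also have "\<dots> \<le> K" using f assms by (simp add: mult_left_le)
  finally show "x \<le> K" .
qed

lemma opnorm_bdd:
  assumes "bounded_op T"
  shows "bdd_above {l2norm (T f) |f. f \<in> l2 \<and> l2norm f \<le> 1}"
proof -
  obtain K where K: "K \<ge> 0" "\<forall>f\<in>l2. l2norm (T f) \<le> K * l2norm f" using bounded_bound[OF assms] by auto
  show ?thesis
  proof (rule bdd_aboveI)
    fix x assume "x \<in> {l2norm (T f) |f. f \<in> l2 \<and> l2norm f \<le> 1}"
    then obtain f where f: "f \<in> l2" "l2norm f \<le> 1" and x: "x = l2norm (T f)" by auto
    have "x \<le> K * l2norm f" using K f x by auto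
    also have "\<dots> \<le> K" using f K by (simp add: mult_left_le)
    finally show "x \<le> K" .
  qed
qed

lemma opnorm_le:
  assumes T: "bounded_op T" and f: "f \<in> l2"
  shows "l2norm (T f) \<le> opnorm T * l2norm f"
proof (cases "l2norm f = 0")
  case True
  then have "f = (\<lambda>i. 0)" using f l2norm_eq0 by blast
  then show ?thesis using lin_zero[OF bounded_lin[OF T]] True by simp
next
  case False
  define a where "a = l2norm f"
  have a: "a > 0" using False l2norm_nonneg[of f] a_def by simp
  define g where "g = vsmult (complex_of_real (1/a)) f"
  have g: "g \<in> l2" "l2norm g \<le> 1"
    using f a by (simp_all add: g_def l2norm_smult a_def norm_divide)
  have "l2norm (T g) \<le> opnorm T"
    unfolding opnorm_def by (rule cSup_upper) (use g opnorm_bdd[OF T] in auto)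
  moreover have "l2norm (T g) = l2norm (T f) / a"
    using a by (simp add: g_def lin_smult[OF bounded_lin[OF T] f] l2norm_smult norm_divide)
  ultimately have "l2norm (T f) / a \<le> opnorm T" by simp
  then show ?thesis using a by (simp add: a_def pos_divide_le_eq mult.commute)
qed

lemma opnorm_nonneg: "bounded_op T \<Longrightarrow> 0 \<le> opnorm T"
  using opnorm_le[of T "\<lambda>i. 0"] lin_zero[OF bounded_lin, of T]
  unfolding opnorm_def
  by (intro cSup_upper2[where x = 0]) (auto intro!: exI[where x = "\<lambda>i. 0"] opnorm_bdd)

lemma opnorm_cong: "(\<forall>f\<in>l2. T f = T' f) \<Longrightarrow> opnorm T = opnorm T'"
  unfolding opnorm_def by (rule arg_cong[where f = Sup]) (auto; metis)

lemma lin_cong: "(\<forall>f\<in>l2. T f = T' f) \<Longrightarrow> lin T \<Longrightarrow> lin T'"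
  unfolding lin_def by (simp add: vadd_l2 vsmult_l2)

lemma bounded_op_cong: "(\<forall>f\<in>l2. T f = T' f) \<Longrightarrow> bounded_op T \<Longrightarrow> bounded_op T'"
  unfolding bounded_op_iff using lin_cong by (metis)

lemma sing_val_cong: "(\<forall>f\<in>l2. T f = T' f) \<Longrightarrow> sing_val T n = sing_val T' n"
proof -
  assume eq: "\<forall>f\<in>l2. T f = T' f"
  have "opnorm (op_sub T F) = opnorm (op_sub T' F)" for F
    by (rule opnorm_cong) (simp add: eq)
  then show ?thesis unfolding sing_val_def by simp
qed

lemma schatten_cong: "(\<forall>f\<in>l2. T f = T' f) \<Longrightarrow> schatten p T \<Longrightarrow> schatten p T'"
  unfolding schatten_def using bounded_op_cong sing_val_cong by (metis (no_types, lifting) ext)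

lemma snorm_cong: "(\<forall>f\<in>l2. T f = T' f) \<Longrightarrow> snorm p T = snorm p T'"
  unfolding snorm_def using sing_val_cong by (metis (no_types, lifting) ext)

lemma sum_split_nat: "(\<Sum>k<n+m. h k) = (\<Sum>k<n. h k) + (\<Sum>k<m. h (n+k))" for n m :: nat
  by (induction m) (simp_all add: algebra_simps)

lemma lin_comp: "lin A \<Longrightarrow> lin B \<Longrightarrow> lin (\<lambda>f. A (B f))"
  unfolding lin_def by simp

lemma lin_opsub: "lin A \<Longrightarrow> lin B \<Longrightarrow> lin (op_sub A B)"
  unfolding lin_def by (simp add: fun_eq_iff algebra_simps)

lemma lin_scal: "lin A \<Longrightarrow> lin (\<lambda>f. vsmult c (A f))"
  unfolding lin_def by (simp add: fun_eq_iff algebra_simps)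

lemma lin_zero_op: "lin (\<lambda>f i. 0)"
  unfolding lin_def by (simp add: fun_eq_iff)

lemma lin_id: "lin (\<lambda>f. f)"
  unfolding lin_def by simp

lemma bounded_comp:
  assumes A: "bounded_op A" and B: "bounded_op B"
  shows "bounded_op (\<lambda>f. A (B f))" "opnorm (\<lambda>f. A (B f)) \<le> opnorm A * opnorm B"
proof -
  have bd: "\<forall>f\<in>l2. l2norm (A (B f)) \<le> (opnorm A * opnorm B) * l2norm f"
  proof
    fix f :: "'a vec" assume f: "f \<in> l2"
    have "l2norm (A (B f)) \<le> opnorm A * l2norm (B f)"
      by (rule opnorm_le[OF A lin_l2[OF bounded_lin[OF B] f]])
    also have "\<dots> \<le> opnorm A * (opnorm B * l2norm f)"
      by (rule mult_left_mono[OF opnorm_le[OF B f] opnorm_nonneg[OF A]])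
    finally show "l2norm (A (B f)) \<le> (opnorm A * opnorm B) * l2norm f" by (simp add: mult.assoc)
  qed
  show "bounded_op (\<lambda>f. A (B f))"
    unfolding bounded_op_iff using bd lin_comp[OF bounded_lin[OF A] bounded_lin[OF B]] by blast
  show "opnorm (\<lambda>f. A (B f)) \<le> opnorm A * opnorm B"
    by (rule opnorm_least[OF bd]) (simp add: opnorm_nonneg A B)
qed

lemma bounded_sub:
  assumes A: "bounded_op A" and B: "bounded_op B"
  shows "bounded_op (op_sub A B)" "opnorm (op_sub A B) \<le> opnorm A + opnorm B"
proof -
  have bd: "\<forall>f\<in>l2. l2norm (op_sub A B f) \<le> (opnorm A + opnorm B) * l2norm f"
  proof
    fix f :: "'a vec" assume f: "f \<in> l2"
    have "l2norm (op_sub A B f) \<le> l2norm (A f) + l2norm (B f)"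
      using l2norm_sub_le lin_l2[OF bounded_lin[OF A] f] lin_l2[OF bounded_lin[OF B] f] by simp
    also have "\<dots> \<le> opnorm A * l2norm f + opnorm B * l2norm f"
      by (intro add_mono opnorm_le A B f)
    finally show "l2norm (op_sub A B f) \<le> (opnorm A + opnorm B) * l2norm f" by (simp add: algebra_simps)
  qed
  show "bounded_op (op_sub A B)"
    unfolding bounded_op_iff using bd lin_opsub[OF bounded_lin[OF A] bounded_lin[OF B]] by blast
  show "opnorm (op_sub A B) \<le> opnorm A + opnorm B"
    by (rule opnorm_least[OF bd]) (simp add: opnorm_nonneg A B)
qed

lemma bounded_scal:
  assumes A: "bounded_op A"
  shows "bounded_op (\<lambda>f. vsmult c (A f))" "opnorm (\<lambda>f. vsmult c (A f)) \<le> cmod c * opnorm A"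
proof -
  have bd: "\<forall>f\<in>l2. l2norm (vsmult c (A f)) \<le> (cmod c * opnorm A) * l2norm f"
  proof
    fix f :: "'a vec" assume f: "f \<in> l2"
    have "l2norm (vsmult c (A f)) = cmod c * l2norm (A f)" by (rule l2norm_smult)
    also have "\<dots> \<le> cmod c * (opnorm A * l2norm f)"
      by (intro mult_left_mono opnorm_le A f) simp
    finally show "l2norm (vsmult c (A f)) \<le> (cmod c * opnorm A) * l2norm f" by (simp add: mult.assoc)
  qed
  show "bounded_op (\<lambda>f. vsmult c (A f))"
    unfolding bounded_op_iff using bd lin_scal[OF bounded_lin[OF A]] by blast
  show "opnorm (\<lambda>f. vsmult c (A f)) \<le> cmod c * opnorm A"
    by (rule opnorm_least[OF bd]) (simp add: opnorm_nonneg A)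
qed

lemma bounded_zero_op: "bounded_op (\<lambda>f i. 0)"
  unfolding bounded_op_iff using lin_zero_op by (auto intro!: exI[of _ 0])

subsection \<open>Rank\<close>

lemma lin_comb:
  fixes n :: nat
  assumes A: "lin A" and v: "\<forall>k<n. v k \<in> l2"
  shows "(\<lambda>i. \<Sum>k<n. c k * v k i) \<in> l2 \<and> A (\<lambda>i. \<Sum>k<n. c k * v k i) = (\<lambda>i. \<Sum>k<n. c k * A (v k) i)"
  using v
proof (induction n)
  case 0
  then show ?case using lin_zero[OF A] by simp
next
  case (Suc n)
  have IH: "(\<lambda>i. \<Sum>k<n. c k * v k i) \<in> l2" "A (\<lambda>i. \<Sum>k<n. c k * v k i) = (\<lambda>i. \<Sum>k<n. c k * A (v k) i)"
    using Suc by auto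
  have vn: "v n \<in> l2" using Suc.prems by auto
  have e: "(\<lambda>i. \<Sum>k<Suc n. c k * v k i) = vadd (\<lambda>i. \<Sum>k<n. c k * v k i) (vsmult (c n) (v n))"
    by (simp add: fun_eq_iff)
  show ?case
    unfolding e using IH vn A
    by (simp add: lin_add lin_smult fun_eq_iff)
qed

lemma rank_le_zero_op: "rank_le (\<lambda>f i. 0) n"
  unfolding rank_le_def by (auto intro!: exI[of _ "\<lambda>k i. 0"] exI[of _ "\<lambda>k. 0"])

lemma rank_le_Suc: "rank_le F n \<Longrightarrow> rank_le F (Suc n)"
proof -
  assume "rank_le F n"
  then obtain v where v: "\<forall>k<n. v k \<in> l2" and F: "\<forall>f\<in>l2. \<exists>c. F f = (\<lambda>i. \<Sum>k<n. c k * v k i)"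
    unfolding rank_le_def by blast
  define v' where "v' = v(n := (\<lambda>i. 0))"
  have "\<forall>k<Suc n. v' k \<in> l2" using v by (auto simp: less_Suc_eq v'_def)
  moreover have "\<forall>f\<in>l2. \<exists>c. F f = (\<lambda>i. \<Sum>k<Suc n. c k * v' k i)"
  proof
    fix f :: "'a vec" assume "f \<in> l2"
    then obtain c where c: "F f = (\<lambda>i. \<Sum>k<n. c k * v k i)" using F by blast
    show "\<exists>c. F f = (\<lambda>i. \<Sum>k<Suc n. c k * v' k i)"
      by (rule exI[of _ c]) (simp add: c v'_def)
  qed
  ultimately show ?thesis unfolding rank_le_def by blast
qed

lemma rank_le_zero: "rank_le F 0 \<Longrightarrow> f \<in> l2 \<Longrightarrow> F f = (\<lambda>i. 0)"
  unfolding rank_le_def by auto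

lemma rank_le_comp:
  assumes A: "lin A" and C: "\<forall>f\<in>l2. C f \<in> l2" and F: "rank_le F n"
  shows "rank_le (\<lambda>f. A (F (C f))) n"
proof -
  obtain v where v: "\<forall>k<n. v k \<in> l2" and Fv: "\<forall>f\<in>l2. \<exists>c. F f = (\<lambda>i. \<Sum>k<n. c k * v k i)"
    using F unfolding rank_le_def by blast
  show ?thesis unfolding rank_le_def
  proof (intro exI[of _ "\<lambda>k. A (v k)"] conjI ballI allI impI)
    show "\<And>k. k < n \<Longrightarrow> A (v k) \<in> l2" using v lin_l2[OF A] by blast
    fix f :: "'a vec" assume f: "f \<in> l2"
    then obtain c where c: "F (C f) = (\<lambda>i. \<Sum>k<n. c k * v k i)" using Fv C by blast
    show "\<exists>c. A (F (C f)) = (\<lambda>i. \<Sum>k<n. c k * A (v k) i)"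
      by (rule exI[of _ c]) (simp add: c lin_comb[OF A v])
  qed
qed

lemma rank_le_sub:
  assumes F: "rank_le F n" and G: "rank_le G m"
  shows "rank_le (op_sub F G) (n + m)"
proof -
  obtain v where v: "\<forall>k<n. v k \<in> l2" and Fv: "\<forall>f\<in>l2. \<exists>c. F f = (\<lambda>i. \<Sum>k<n. c k * v k i)"
    using F unfolding rank_le_def by blast
  obtain w where w: "\<forall>k<m. w k \<in> l2" and Gw: "\<forall>f\<in>l2. \<exists>c. G f = (\<lambda>i. \<Sum>k<m. c k * w k i)"
    using G unfolding rank_le_def by blast
  define u where "u k = (if k < n then v k else w (k - n))" for k
  show ?thesis unfolding rank_le_def
  proof (intro exI[of _ u] conjI ballI allI impI)
    show "\<And>k. k < n + m \<Longrightarrow> u k \<in> l2" using v w by (auto simp: u_def)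
    fix f :: "'a vec" assume f: "f \<in> l2"
    obtain c where c: "F f = (\<lambda>i. \<Sum>k<n. c k * v k i)" using Fv f by blast
    obtain d where d: "G f = (\<lambda>i. \<Sum>k<m. d k * w k i)" using Gw f by blast
    define e where "e k = (if k < n then c k else - d (k - n))" for k
    have "(\<Sum>k<n+m. e k * u k i) = F f i - G f i" for i
      by (simp add: sum_split_nat c d e_def u_def sum_negf)
    then show "\<exists>c. op_sub F G f = (\<lambda>i. \<Sum>k<n + m. c k * u k i)"
      by (intro exI[of _ e]) (simp add: fun_eq_iff)
  qed
qed

lemma sv_ne: "{opnorm (op_sub X F) |F. bounded_op F \<and> rank_le F n} \<noteq> {}"
  using bounded_zero_op rank_le_zero_op by blast

lemma sv_ge: "(\<And>F. bounded_op F \<Longrightarrow> rank_le F n \<Longrightarrow> c \<le> opnorm (op_sub X F)) \<Longrightarrow> c \<le> sing_val X n"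
  unfolding sing_val_def by (rule cInf_greatest[OF sv_ne]) auto

lemma sv_le:
  assumes X: "bounded_op X" and F: "bounded_op F" "rank_le F n"
  shows "sing_val X n \<le> opnorm (op_sub X F)"
  unfolding sing_val_def
proof (rule cInf_lower)
  show "opnorm (op_sub X F) \<in> {opnorm (op_sub X F) |F. bounded_op F \<and> rank_le F n}" using F by blast
  show "bdd_below {opnorm (op_sub X F) |F. bounded_op F \<and> rank_le F n}"
    by (rule bdd_belowI[of _ 0]) (auto intro!: opnorm_nonneg bounded_sub(1)[OF X])
qed

lemma sv_nonneg: "bounded_op X \<Longrightarrow> 0 \<le> sing_val X n"
  by (rule sv_ge) (auto intro!: opnorm_nonneg bounded_sub(1))

lemma sv_zero: assumes X: "bounded_op X" shows "sing_val X 0 = opnorm X"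
proof (rule antisym)
  have "opnorm (op_sub X (\<lambda>f i. 0)) = opnorm X" by (rule opnorm_cong) (simp add: fun_eq_iff)
  then show "sing_val X 0 \<le> opnorm X"
    using sv_le[OF X bounded_zero_op rank_le_zero_op] by simp
  show "opnorm X \<le> sing_val X 0"
  proof (rule sv_ge)
    fix F :: "'a op" assume "bounded_op F" "rank_le F 0"
    then have "opnorm (op_sub X F) = opnorm X"
      by (intro opnorm_cong) (simp add: rank_le_zero fun_eq_iff)
    then show "opnorm X \<le> opnorm (op_sub X F)" by simp
  qed
qed

lemma sv_Suc: assumes X: "bounded_op X" shows "sing_val X (Suc n) \<le> sing_val X n"
  by (rule sv_ge) (rule sv_le[OF X _ rank_le_Suc])

lemma sv_mono: assumes X: "bounded_op X" shows "m \<le> n \<Longrightarrow> sing_val X n \<le> sing_val X m"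
proof (induction n rule: dec_induct)
  case base then show ?case by simp
next
  case (step n) then show ?case using sv_Suc[OF X, of n] by simp
qed

lemma sv_comp:
  assumes A: "bounded_op A" and X: "bounded_op X" and C: "bounded_op C"
    and D: "\<forall>f\<in>l2. D f = A (X (C f))"
  shows "bounded_op D" "sing_val D n \<le> opnorm A * opnorm C * sing_val X n"
proof -
  have bAXC: "bounded_op (\<lambda>f. A (X (C f)))" by (rule bounded_comp(1)[OF A bounded_comp(1)[OF X C]])
  show bD: "bounded_op D" by (rule bounded_op_cong[OF _ bAXC]) (simp add: D)
  define k where "k = opnorm A * opnorm C"
  have k0: "0 \<le> k" unfolding k_def by (simp add: opnorm_nonneg A C)
  have key: "sing_val D n \<le> k * opnorm (op_sub X F)" if F: "bounded_op F" "rank_le F n" for F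
  proof -
    define G where "G = (\<lambda>f. A (F (C f)))"
    have bG: "bounded_op G" unfolding G_def by (rule bounded_comp(1)[OF A bounded_comp(1)[OF F(1) C]])
    have rG: "rank_le G n" unfolding G_def
      by (rule rank_le_comp[OF bounded_lin[OF A] _ F(2)]) (use lin_l2[OF bounded_lin[OF C]] in blast)
    have "sing_val D n \<le> opnorm (op_sub D G)" by (rule sv_le[OF bD bG rG])
    also have "opnorm (op_sub D G) = opnorm (\<lambda>f. A (op_sub X F (C f)))"
    proof (rule opnorm_cong, intro ballI)
      fix f :: "'a vec" assume f: "f \<in> l2"
      have Cf: "C f \<in> l2" using lin_l2[OF bounded_lin[OF C] f] .
      have "op_sub D G f = vsub (A (X (C f))) (A (F (C f)))"
        using D f by (simp only: op_sub_apply G_def)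
      also have "\<dots> = A (vsub (X (C f)) (F (C f)))"
        by (rule lin_sub[symmetric, OF bounded_lin[OF A] lin_l2[OF bounded_lin[OF X] Cf] lin_l2[OF bounded_lin[OF F(1)] Cf]])
      finally show "op_sub D G f = A (op_sub X F (C f))" by (simp only: op_sub_apply)
    qed
    also have "\<dots> \<le> opnorm A * opnorm (\<lambda>f. op_sub X F (C f))"
      by (rule bounded_comp(2)[OF A bounded_comp(1)[OF bounded_sub(1)[OF X F(1)] C]])
    also have "\<dots> \<le> opnorm A * (opnorm (op_sub X F) * opnorm C)"
      by (rule mult_left_mono[OF bounded_comp(2)[OF bounded_sub(1)[OF X F(1)] C] opnorm_nonneg[OF A]])
    also have "\<dots> = k * opnorm (op_sub X F)" by (simp add: k_def)
    finally show ?thesis .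
  qed
  show "sing_val D n \<le> opnorm A * opnorm C * sing_val X n"
  proof (cases "k = 0")
    case True
    then have "sing_val D n \<le> 0" using key[OF bounded_zero_op rank_le_zero_op] by simp
    moreover have "opnorm A * opnorm C = 0" using True k_def by simp
    ultimately show ?thesis by (metis mult_zero_left)
  next
    case False
    then have kp: "k > 0" using k0 by simp
    have "sing_val D n / k \<le> sing_val X n"
    proof (rule sv_ge)
      fix F :: "'a op" assume "bounded_op F" "rank_le F n"
      then have "sing_val D n \<le> k * opnorm (op_sub X F)" by (rule key)
      then show "sing_val D n / k \<le> opnorm (op_sub X F)" using kp by (simp add: pos_divide_le_eq mult.commute)
    qed
    then show ?thesis using kp by (simp add: k_def pos_divide_le_eq mult.commute)
  qed
qed

lemma sv_sub:
  assumes X: "bounded_op X" and Y: "bounded_op Y"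
  shows "sing_val (op_sub X Y) (n + m) \<le> sing_val X n + sing_val Y m"
proof -
  have key: "sing_val (op_sub X Y) (n + m) \<le> opnorm (op_sub X F) + opnorm (op_sub Y G)"
    if F: "bounded_op F" "rank_le F n" and G: "bounded_op G" "rank_le G m" for F G
  proof -
    have "sing_val (op_sub X Y) (n + m) \<le> opnorm (op_sub (op_sub X Y) (op_sub F G))"
      by (rule sv_le[OF bounded_sub(1)[OF X Y] bounded_sub(1)[OF F(1) G(1)] rank_le_sub[OF F(2) G(2)]])
    also have "\<dots> = opnorm (op_sub (op_sub X F) (op_sub Y G))"
      by (rule opnorm_cong) (simp add: fun_eq_iff)
    also have "\<dots> \<le> opnorm (op_sub X F) + opnorm (op_sub Y G)"
      by (rule bounded_sub(2)[OF bounded_sub(1)[OF X F(1)] bounded_sub(1)[OF Y G(1)]])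
    finally show ?thesis .
  qed
  have "sing_val (op_sub X Y) (n + m) - sing_val X n \<le> opnorm (op_sub Y G)"
    if G: "bounded_op G" "rank_le G m" for G
  proof -
    have "sing_val (op_sub X Y) (n + m) - opnorm (op_sub Y G) \<le> sing_val X n"
    proof (rule sv_ge)
      fix F :: "'a op" assume "bounded_op F" "rank_le F n"
      then have "sing_val (op_sub X Y) (n + m) \<le> opnorm (op_sub X F) + opnorm (op_sub Y G)" using key G by blast
      then show "sing_val (op_sub X Y) (n + m) - opnorm (op_sub Y G) \<le> opnorm (op_sub X F)" by simp
    qed
    then show ?thesis by simp
  qed
  then have "sing_val (op_sub X Y) (n + m) - sing_val X n \<le> sing_val Y m"
    by (intro sv_ge)
  then show ?thesis by simp
qed

lemma powr_sum_le:
  fixes a b p :: real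
  assumes a: "0 \<le> a" and b: "0 \<le> b" and p: "0 \<le> p"
  shows "(a + b) powr p \<le> 2 powr p * (a powr p + b powr p)"
proof -
  have "(a + b) powr p \<le> (2 * max a b) powr p"
    by (rule powr_mono2) (use a b p in auto)
  also have "\<dots> = 2 powr p * max a b powr p" by (rule powr_mult)
  also have "max a b powr p \<le> a powr p + b powr p"
    by (cases "a \<le> b") (simp_all add: max_def)
  then have "2 powr p * max a b powr p \<le> 2 powr p * (a powr p + b powr p)"
    by (rule mult_left_mono) simp
  finally show ?thesis .
qed

lemma sum_div2: "(\<Sum>j<2*N. g (j div 2)) = 2 * (\<Sum>k<N. g k :: real)" for N :: nat
proof (induction N)
  case 0 then show ?case by simp
next
  case (Suc N)
  have e: "2 * Suc N = Suc (Suc (2*N))" by simp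
  have "(\<Sum>j<2*Suc N. g (j div 2)) = (\<Sum>j<2*N. g (j div 2)) + g ((2*N) div 2) + g (Suc (2*N) div 2)"
    unfolding e by (simp only: sum.lessThan_Suc)
  also have "(2*N) div 2 = N" by simp
  also have "Suc (2*N) div 2 = N" by simp
  finally have "(\<Sum>j<2*Suc N. g (j div 2)) = (\<Sum>j<2*N. g (j div 2)) + g N + g N" .
  then show ?case using Suc by simp
qed

lemma summable_div2:
  fixes g :: "nat \<Rightarrow> real"
  assumes g: "summable g" "\<And>n. 0 \<le> g n"
  shows "summable (\<lambda>j. g (j div 2))"
proof (rule bounded_imp_summable)
  show "\<And>n. 0 \<le> g (n div 2)" using g by simp
  fix n
  have "(\<Sum>j\<le>n. g (j div 2)) \<le> (\<Sum>j<2*(Suc n). g (j div 2))"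
    by (rule sum_mono2) (use g in auto)
  also have "\<dots> = 2 * (\<Sum>k<Suc n. g k)" by (rule sum_div2)
  also have "\<dots> \<le> 2 * suminf g"
    using sum_le_suminf[OF g(1), of "{..<Suc n}"] g(2) by simp
  finally show "(\<Sum>j\<le>n. g (j div 2)) \<le> 2 * suminf g" .
qed

lemma schatten_bounded: "schatten p X \<Longrightarrow> bounded_op X" by (simp add: schatten_def)

lemma schatten_sub:
  assumes p: "0 \<le> p" and X: "schatten p X" and Y: "schatten p Y"
  shows "schatten p (op_sub X Y)"
proof -
  have bX: "bounded_op X" and bY: "bounded_op Y" using X Y by (auto simp: schatten_def)
  have sX: "summable (\<lambda>n. sing_val X n powr p)" and sY: "summable (\<lambda>n. sing_val Y n powr p)"
    using X Y by (auto simp: schatten_def)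
  have le: "sing_val (op_sub X Y) j \<le> sing_val X (j div 2) + sing_val Y (j div 2)" for j
  proof -
    have "sing_val (op_sub X Y) j \<le> sing_val (op_sub X Y) (j div 2 + j div 2)"
      by (rule sv_mono[OF bounded_sub(1)[OF bX bY]]) simp
    also have "\<dots> \<le> sing_val X (j div 2) + sing_val Y (j div 2)" by (rule sv_sub[OF bX bY])
    finally show ?thesis .
  qed
  have "summable (\<lambda>j. (\<lambda>k. 2 powr p * (sing_val X k powr p + sing_val Y k powr p)) (j div 2))"
    by (rule summable_div2) (auto intro!: summable_mult summable_add sX sY)
  then have "summable (\<lambda>j. sing_val (op_sub X Y) j powr p)"
  proof (rule summable_comparison_test'[where N=0])
    fix j :: nat
    have "sing_val (op_sub X Y) j powr p \<le> (sing_val X (j div 2) + sing_val Y (j div 2)) powr p"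
      by (rule powr_mono2[OF p sv_nonneg[OF bounded_sub(1)[OF bX bY]] le])
    also have "\<dots> \<le> 2 powr p * (sing_val X (j div 2) powr p + sing_val Y (j div 2) powr p)"
      by (rule powr_sum_le[OF sv_nonneg[OF bX] sv_nonneg[OF bY] p])
    finally show "norm (sing_val (op_sub X Y) j powr p) \<le> 2 powr p * (sing_val X (j div 2) powr p + sing_val Y (j div 2) powr p)"
      by simp
  qed
  then show ?thesis unfolding schatten_def using bounded_sub(1)[OF bX bY] by simp
qed

lemma schatten_comp:
  assumes p: "0 < p" and A: "bounded_op A" and X: "schatten p X" and C: "bounded_op C"
    and D: "\<forall>f\<in>l2. D f = A (X (C f))"
  shows "schatten p D" "snorm p D \<le> opnorm A * opnorm C * snorm p X"
proof -
  have bX: "bounded_op X" using X by (simp add: schatten_def)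
  have sX: "summable (\<lambda>n. sing_val X n powr p)" using X by (simp add: schatten_def)
  define k where "k = opnorm A * opnorm C"
  have k0: "0 \<le> k" by (simp add: k_def opnorm_nonneg A C)
  have bD: "bounded_op D" by (rule sv_comp(1)[OF A bX C D])
  have le: "sing_val D n powr p \<le> k powr p * sing_val X n powr p" for n
  proof -
    have "sing_val D n powr p \<le> (k * sing_val X n) powr p"
      by (rule powr_mono2) (use p sv_nonneg[OF bD] sv_comp(2)[OF A bX C D] in \<open>auto simp: k_def\<close>)
    also have "\<dots> = k powr p * sing_val X n powr p" by (rule powr_mult)
    finally show ?thesis .
  qed
  have sD: "summable (\<lambda>n. sing_val D n powr p)"
    by (rule summable_comparison_test'[where N=0, OF summable_mult[OF sX, of "k powr p"]]) (use le in simp)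
  show "schatten p D" unfolding schatten_def using bD sD by simp
  have "(\<Sum>n. sing_val D n powr p) \<le> (\<Sum>n. k powr p * sing_val X n powr p)"
    by (rule suminf_le[OF le sD summable_mult[OF sX]])
  also have "\<dots> = k powr p * (\<Sum>n. sing_val X n powr p)" by (rule suminf_mult[OF sX])
  finally have sle: "(\<Sum>n. sing_val D n powr p) \<le> k powr p * (\<Sum>n. sing_val X n powr p)" .
  have "snorm p D \<le> (k powr p * (\<Sum>n. sing_val X n powr p)) powr (1/p)"
    unfolding snorm_def
    by (rule powr_mono2[OF _ _ sle]) (use p sD in \<open>auto intro!: suminf_nonneg\<close>)
  also have "\<dots> = (k powr p) powr (1/p) * snorm p X"
    unfolding snorm_def by (rule powr_mult)
  also have "(k powr p) powr (1/p) = k"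
    using p k0 by (simp add: powr_powr)
  finally show "snorm p D \<le> opnorm A * opnorm C * snorm p X" by (simp add: k_def)
qed

lemma opnorm_le_snorm:
  assumes p: "0 < p" and X: "schatten p X"
  shows "opnorm X \<le> snorm p X"
proof -
  have bX: "bounded_op X" and sX: "summable (\<lambda>n. sing_val X n powr p)" using X by (auto simp: schatten_def)
  have "sing_val X 0 powr p \<le> (\<Sum>n. sing_val X n powr p)"
    using sum_le_suminf[OF sX, of "{0}"] by simp
  then have "(sing_val X 0 powr p) powr (1/p) \<le> snorm p X"
    unfolding snorm_def by (intro powr_mono2) (use p in simp_all)
  moreover have "(sing_val X 0 powr p) powr (1/p) = sing_val X 0"
    using p sv_nonneg[OF bX] by (simp add: powr_powr)
  ultimately show ?thesis using sv_zero[OF bX] by simp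
qed

lemma snorm_nonneg: "0 \<le> snorm p X" by (simp add: snorm_def)

lemma Abs_sub: "a \<in> l2 \<Longrightarrow> b \<in> l2 \<Longrightarrow> Abs_l2t (vsub a b) = Abs_l2t a - Abs_l2t b"
  by (simp add: vec_of_inject[symmetric] minus_l2t.rep_eq Abs_l2t_inverse vsub_def l2_diff)

lemma Abs_add: "a \<in> l2 \<Longrightarrow> b \<in> l2 \<Longrightarrow> Abs_l2t (vadd a b) = Abs_l2t a + Abs_l2t b"
  by (simp add: vec_of_inject[symmetric] plus_l2t.rep_eq Abs_l2t_inverse vadd_def l2_add)

lemma unitary_props:
  assumes "unitary_op U"
  shows "bounded_op U" "lin U" "\<And>f. f \<in> l2 \<Longrightarrow> l2norm (U f) = l2norm f" "\<And>f. f \<in> l2 \<Longrightarrow> U f \<in> l2"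
  using assms by (auto simp: unitary_op_def bounded_lin lin_l2)

lemma unitary_inner:
  assumes U: "unitary_op U" and x: "x \<in> l2" and y: "y \<in> l2"
  shows "inner (Abs_l2t (U x)) (Abs_l2t (U y)) = inner (Abs_l2t x) (Abs_l2t y)"
proof -
  have Ux: "U x \<in> l2" and Uy: "U y \<in> l2" using unitary_props(4)[OF U] x y by auto
  have "Abs_l2t (U x) + Abs_l2t (U y) = Abs_l2t (U (vadd x y))"
    using Ux Uy x y by (simp add: Abs_add lin_add[OF unitary_props(2)[OF U]])
  then have "norm (Abs_l2t (U x) + Abs_l2t (U y)) = norm (Abs_l2t x + Abs_l2t y)"
    using x y by (simp add: norm_Abs unitary_props(3)[OF U] unitary_props(4)[OF U] Abs_add[symmetric])
  moreover have "norm (Abs_l2t (U x)) = norm (Abs_l2t x)" "norm (Abs_l2t (U y)) = norm (Abs_l2t y)"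
    using x y Ux Uy by (simp_all add: norm_Abs unitary_props(3)[OF U])
  ultimately show ?thesis by (simp add: dot_norm)
qed

lemma unitary_fix_zero:
  assumes U: "unitary_op U" and dense: "dense_in_l2 (cayley_dom U)" and x: "x \<in> l2" and fx: "U x = x"
  shows "x = (\<lambda>i. 0)"
proof (rule ccontr)
  assume nz: "x \<noteq> (\<lambda>i. 0)"
  then have e: "l2norm x > 0" using l2norm_zero_iff[OF x] l2norm_nonneg[of x] by simp
  then obtain g where g: "g \<in> cayley_dom U" and lt: "l2norm (vsub x g) < l2norm x"
    using dense x unfolding dense_in_l2_def by blast
  then obtain y where y: "y \<in> l2" and gy: "g = vsub (U y) y" unfolding cayley_dom_def by blast
  have Uy: "U y \<in> l2" using unitary_props(4)[OF U y] .
  define X where "X = Abs_l2t x"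
  define V where "V = Abs_l2t g"
  have gl2: "g \<in> l2" using gy y Uy by simp
  have V: "V = Abs_l2t (U y) - Abs_l2t y" using gy Uy y by (simp add: V_def Abs_sub)
  have "inner V X = inner (Abs_l2t (U y)) X - inner (Abs_l2t y) X"
    by (simp add: V inner_diff_left)
  also have "inner (Abs_l2t (U y)) X = inner (Abs_l2t (U y)) (Abs_l2t (U x))"
    by (simp add: X_def fx)
  also have "\<dots> = inner (Abs_l2t y) X" using unitary_inner[OF U y x] by (simp add: X_def)
  finally have i0: "inner V X = 0" by simp
  have "(norm (X - V))\<^sup>2 = (norm X)\<^sup>2 + (norm V)\<^sup>2 - 2 * inner X V"
    using dot_norm_neg[of X V] by simp
  moreover have "inner X V = 0" using i0 by (simp add: inner_commute)
  ultimately have "(norm X)\<^sup>2 \<le> (norm (X - V))\<^sup>2" by simp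
  then have "norm X \<le> norm (X - V)" by (rule power2_le_imp_le) simp
  moreover have "norm (X - V) = l2norm (vsub x g)"
    using x gl2 by (simp add: X_def V_def Abs_sub[symmetric] norm_Abs)
  moreover have "norm X = l2norm x" using x by (simp add: X_def norm_Abs)
  ultimately show False using lt by simp
qed

lemma cay_inj:
  assumes U: "unitary_op U" and dense: "dense_in_l2 (cayley_dom U)"
    and x: "x \<in> l2" and y: "y \<in> l2" and eq: "vsub (U x) x = vsub (U y) y"
  shows "x = y"
proof -
  have "U (vsub x y) = vsub (U x) (U y)" by (rule lin_sub[OF unitary_props(2)[OF U] x y])
  also have "\<dots> = vsub x y"
  proof (rule ext)
    fix i
    have h: "U x i - x i = U y i - y i" using eq by (metis vsub_apply)
    have "U x i - U y i - (x i - y i) = (U x i - x i) - (U y i - y i)" by (simp add: algebra_simps)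
    then have "U x i - U y i - (x i - y i) = 0" using h by simp
    then show "vsub (U x) (U y) i = vsub x y i" by simp
  qed
  finally have "vsub x y = (\<lambda>i. 0)" by (rule unitary_fix_zero[OF U dense vsub_l2[OF x y]])
  then show ?thesis by (simp add: fun_eq_iff)
qed

lemma cayley_eq:
  assumes U: "unitary_op U" and dense: "dense_in_l2 (cayley_dom U)" and x: "x \<in> l2"
  shows "cayley U (vsub (U x) x) = vsmult \<i> (vadd (U x) x)"
proof -
  have "(THE x'. x' \<in> l2 \<and> vsub (U x') x' = vsub (U x) x) = x"
    by (rule the_equality) (use x cay_inj[OF U dense] in auto)
  then show ?thesis by (simp add: cayley_def Let_def)
qed

subsection \<open>Inverse of a bounded-below surjection\<close>

definition invop :: "('i::countable) op \<Rightarrow> 'i op" where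
  "invop M y = (THE x. x \<in> l2 \<and> M x = y)"

lemma invop_props:
  fixes M :: "('a::countable) op"
  assumes M: "lin M" and surj: "\<forall>y\<in>l2. \<exists>x\<in>l2. M x = y"
    and bd: "\<forall>x\<in>l2. l2norm x \<le> K * l2norm (M x)"
  shows "\<And>x1 x2. x1 \<in> l2 \<Longrightarrow> x2 \<in> l2 \<Longrightarrow> M x1 = M x2 \<Longrightarrow> x1 = x2"
    and "\<And>y. y \<in> l2 \<Longrightarrow> invop M y \<in> l2 \<and> M (invop M y) = y"
    and "\<And>x. x \<in> l2 \<Longrightarrow> invop M (M x) = x"
    and "bounded_op (invop M)"
    and "\<And>y. y \<in> l2 \<Longrightarrow> l2norm (invop M y) \<le> K * l2norm y"
proof -
  show uniq: "x1 = x2" if "x1 \<in> l2" "x2 \<in> l2" "M x1 = M x2" for x1 x2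
  proof -
    have "l2norm (vsub x1 x2) \<le> K * l2norm (M (vsub x1 x2))" using bd that by simp
    also have "M (vsub x1 x2) = (\<lambda>i. 0)" using that by (simp add: lin_sub[OF M] fun_eq_iff)
    finally have "l2norm (vsub x1 x2) \<le> 0" by (simp add: vsub_def)
    then have "l2norm (vsub x1 x2) = 0" using l2norm_nonneg[of "vsub x1 x2"] by linarith
    then have "vsub x1 x2 = (\<lambda>i. 0)" by (rule l2norm_eq0[OF vsub_l2[OF that(1,2)]])
    then show ?thesis by (simp add: fun_eq_iff)
  qed
  show inv: "invop M y \<in> l2 \<and> M (invop M y) = y" if "y \<in> l2" for y
  proof -
    from bspec[OF surj that] obtain x where x: "x \<in> l2" "M x = y" by (rule bexE)
    have eq: "invop M y = x" unfolding invop_def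
    proof (rule the_equality)
      show "x \<in> l2 \<and> M x = y" using x by (rule conjI)
      fix x' assume h: "x' \<in> l2 \<and> M x' = y"
      then have "M x' = M x" using x(2) by simp
      then show "x' = x" using uniq[of x' x] x(1) h by blast
    qed
    show ?thesis unfolding eq using x by (rule conjI)
  qed
  show invM: "invop M (M x) = x" if "x \<in> l2" for x
  proof -
    have a: "invop M (M x) \<in> l2 \<and> M (invop M (M x)) = M x" by (rule inv[OF lin_l2[OF M that]])
    show ?thesis by (rule uniq) (use a that in simp_all)
  qed
  show nb: "l2norm (invop M y) \<le> K * l2norm y" if "y \<in> l2" for y
  proof -
    have "l2norm (invop M y) \<le> K * l2norm (M (invop M y))" using bd inv[OF that] by blast
    then show ?thesis using inv[OF that] by simp
  qed
  have "lin (invop M)" unfolding lin_def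
  proof (intro conjI ballI allI)
    fix f g :: "'a vec" assume f: "f \<in> l2" and g: "g \<in> l2"
    show "invop M f \<in> l2" using inv[OF f] by simp
    have "M (vadd (invop M f) (invop M g)) = vadd f g"
      using inv[OF f] inv[OF g] by (simp add: lin_add[OF M])
    moreover have "invop M (M (vadd (invop M f) (invop M g))) = vadd (invop M f) (invop M g)"
      by (rule invM) (use inv[OF f] inv[OF g] in simp)
    ultimately show "invop M (vadd f g) = vadd (invop M f) (invop M g)" by simp
  next
    fix f :: "'a vec" and c :: complex assume f: "f \<in> l2"
    have "M (vsmult c (invop M f)) = vsmult c f"
      using inv[OF f] by (simp add: lin_smult[OF M])
    moreover have "invop M (M (vsmult c (invop M f))) = vsmult c (invop M f)"
      by (rule invM) (use inv[OF f] in simp)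
    ultimately show "invop M (vsmult c f) = vsmult c (invop M f)" by simp
  qed
  then show "bounded_op (invop M)" unfolding bounded_op_iff using nb by blast
qed

definition Mz :: "('i::countable) op \<Rightarrow> complex \<Rightarrow> 'i op" where
  "Mz U z x = vadd (vsmult (\<i> - z) (U x)) (vsmult (\<i> + z) x)"

lemma lin_Mz: "lin U \<Longrightarrow> lin (Mz U z)"
  unfolding lin_def Mz_def by (simp add: fun_eq_iff algebra_simps)

definition Phi :: "('i::countable) op \<Rightarrow> complex \<Rightarrow> 'i op" where
  "Phi U z y = vsub (cayley U y) (vsmult z y)"

lemma Phi_eq:
  assumes U: "unitary_op U" and dense: "dense_in_l2 (cayley_dom U)" and x: "x \<in> l2"
  shows "Phi U z (vsub (U x) x) = Mz U z x"
  unfolding Phi_def cayley_eq[OF U dense x] Mz_def by (simp add: fun_eq_iff algebra_simps)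

lemma res_set_unfold: "z \<in> cayley_resolvent_set U \<longleftrightarrow>
   bij_betw (Phi U z) (cayley_dom U) l2 \<and> bounded_op (cayley_resolvent U z)"
  unfolding cayley_resolvent_set_def Phi_def[abs_def] by simp

lemma resolvent_unfold: "cayley_resolvent U z y = (THE x. x \<in> cayley_dom U \<and> Phi U z x = y)"
  unfolding cayley_resolvent_def Phi_def by simp

lemma res_s:
  assumes U: "unitary_op U" and dense: "dense_in_l2 (cayley_dom U)" and z: "z \<in> cayley_resolvent_set U"
  shows "\<forall>y\<in>l2. \<exists>x\<in>l2. Mz U z x = y" "\<exists>K>0. \<forall>x\<in>l2. l2norm x \<le> K * l2norm (Mz U z x)"
proof -
  have bij: "bij_betw (Phi U z) (cayley_dom U) l2" and bR: "bounded_op (cayley_resolvent U z)"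
    using z by (auto simp: res_set_unfold)
  have Ul2: "\<And>f. f \<in> l2 \<Longrightarrow> U f \<in> l2" by (rule unitary_props(4)[OF U])
  show "\<forall>y\<in>l2. \<exists>x\<in>l2. Mz U z x = y"
  proof
    fix y :: "'a vec" assume y: "y \<in> l2"
    then have "y \<in> Phi U z ` cayley_dom U" using bij by (simp add: bij_betw_def)
    then obtain d where d: "d \<in> cayley_dom U" "y = Phi U z d" by (rule imageE)
    obtain x where x: "x \<in> l2" "d = vsub (U x) x" using d(1) unfolding cayley_dom_def by (rule imageE)
    have "Mz U z x = y" using d x Phi_eq[OF U dense x(1)] by simp
    then show "\<exists>x\<in>l2. Mz U z x = y" using x(1) by blast
  qed
  obtain KR where KR: "KR \<ge> 0" "\<forall>f\<in>l2. l2norm (cayley_resolvent U z f) \<le> KR * l2norm f"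
    using bounded_bound[OF bR] by blast
  define K where "K = (1 + cmod (\<i> - z) * KR) / 2"
  have Kp: "K > 0" unfolding K_def using KR(1) by (simp add: add_pos_nonneg)
  have "\<forall>x\<in>l2. l2norm x \<le> K * l2norm (Mz U z x)"
  proof
    fix x :: "'a vec" assume x: "x \<in> l2"
    define y where "y = Mz U z x"
    define d where "d = vsub (U x) x"
    have yl2: "y \<in> l2" unfolding y_def using lin_l2[OF lin_Mz[OF unitary_props(2)[OF U]] x] .
    have dl2: "d \<in> l2" unfolding d_def using x Ul2[OF x] by simp
    have ddom: "d \<in> cayley_dom U" unfolding d_def cayley_dom_def using x by (rule imageI)
    have Phid: "Phi U z d = y" unfolding d_def y_def by (rule Phi_eq[OF U dense x])
    have inj: "inj_on (Phi U z) (cayley_dom U)" using bij by (rule bij_betw_imp_inj_on)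
    have R: "cayley_resolvent U z y = d"
      unfolding resolvent_unfold
    proof (rule the_equality)
      show "d \<in> cayley_dom U \<and> Phi U z d = y" using ddom Phid by (rule conjI)
      fix d' assume h: "d' \<in> cayley_dom U \<and> Phi U z d' = y"
      then have "Phi U z d' = Phi U z d" using Phid by simp
      then show "d' = d" using inj_onD[OF inj _ _ ddom] h by blast
    qed
    have ident: "vsmult (2 * \<i>) x = vsub y (vsmult (\<i> - z) d)"
      unfolding y_def d_def Mz_def by (simp add: fun_eq_iff algebra_simps)
    have "2 * l2norm x = l2norm (vsmult (2 * \<i>) x)" by (simp add: l2norm_smult norm_mult)
    also have "\<dots> = l2norm (vsub y (vsmult (\<i> - z) d))" by (simp only: ident)
    also have "\<dots> \<le> l2norm y + l2norm (vsmult (\<i> - z) d)" by (rule l2norm_sub_le[OF yl2 vsmult_l2[OF dl2]])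
    also have "l2norm (vsmult (\<i> - z) d) = cmod (\<i> - z) * l2norm (cayley_resolvent U z y)"
      by (simp add: l2norm_smult R)
    also have "\<dots> \<le> cmod (\<i> - z) * (KR * l2norm y)"
      using KR(2) yl2 by (intro mult_left_mono) auto
    finally have "2 * l2norm x \<le> (1 + cmod (\<i> - z) * KR) * l2norm y" by (simp add: algebra_simps)
    then show "l2norm x \<le> K * l2norm (Mz U z x)" by (simp add: K_def y_def)
  qed
  then show "\<exists>K>0. \<forall>x\<in>l2. l2norm x \<le> K * l2norm (Mz U z x)" using Kp by blast
qed

lemma res_t:
  assumes U: "unitary_op U" and dense: "dense_in_l2 (cayley_dom U)"
    and surj: "\<forall>y\<in>l2. \<exists>x\<in>l2. Mz U z x = y" and bd: "\<forall>x\<in>l2. l2norm x \<le> K * l2norm (Mz U z x)"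
  shows "z \<in> cayley_resolvent_set U"
    "\<forall>y\<in>l2. cayley_resolvent U z y = vsub (U (invop (Mz U z) y)) (invop (Mz U z) y)"
proof -
  define M where "M = Mz U z"
  define N where "N = invop M"
  have linM: "lin M" unfolding M_def by (rule lin_Mz[OF unitary_props(2)[OF U]])
  note IP = invop_props[OF linM surj[folded M_def] bd[folded M_def]]
  have Ul2: "\<And>f. f \<in> l2 \<Longrightarrow> U f \<in> l2" by (rule unitary_props(4)[OF U])
  have Nl2: "\<And>y. y \<in> l2 \<Longrightarrow> N y \<in> l2" and MN: "\<And>y. y \<in> l2 \<Longrightarrow> M (N y) = y"
    using IP(2) unfolding N_def by auto
  have inj: "inj_on (Phi U z) (cayley_dom U)"
  proof (rule inj_onI)
    fix d1 d2 assume d1: "d1 \<in> cayley_dom U" and d2: "d2 \<in> cayley_dom U" and eq: "Phi U z d1 = Phi U z d2"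
    obtain x1 where x1: "x1 \<in> l2" "d1 = vsub (U x1) x1" using d1 unfolding cayley_dom_def by (rule imageE)
    obtain x2 where x2: "x2 \<in> l2" "d2 = vsub (U x2) x2" using d2 unfolding cayley_dom_def by (rule imageE)
    have "M x1 = M x2" using eq Phi_eq[OF U dense x1(1)] Phi_eq[OF U dense x2(1)] x1(2) x2(2)
      by (simp add: M_def)
    then have "x1 = x2" by (rule IP(1)[OF x1(1) x2(1)])
    then show "d1 = d2" using x1(2) x2(2) by simp
  qed
  have img: "Phi U z ` cayley_dom U = l2"
  proof
    show "Phi U z ` cayley_dom U \<subseteq> l2"
    proof
      fix y assume "y \<in> Phi U z ` cayley_dom U"
      then obtain d where d: "d \<in> cayley_dom U" "y = Phi U z d" by (rule imageE)
      obtain x where x: "x \<in> l2" "d = vsub (U x) x" using d(1) unfolding cayley_dom_def by (rule imageE)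
      have "y = M x" using d x Phi_eq[OF U dense x(1)] by (simp add: M_def)
      then show "y \<in> l2" using lin_l2[OF linM x(1)] by simp
    qed
    show "l2 \<subseteq> Phi U z ` cayley_dom U"
    proof
      fix y :: "'a vec" assume y: "y \<in> l2"
      have "vsub (U (N y)) (N y) \<in> cayley_dom U" unfolding cayley_dom_def using Nl2[OF y] by (rule imageI)
      moreover have "Phi U z (vsub (U (N y)) (N y)) = y"
        using Phi_eq[OF U dense Nl2[OF y]] MN[OF y] by (simp add: M_def)
      ultimately show "y \<in> Phi U z ` cayley_dom U" by (metis imageI)
    qed
  qed
  have Rf: "cayley_resolvent U z y = vsub (U (N y)) (N y)" if y: "y \<in> l2" for y
    unfolding resolvent_unfold
  proof (rule the_equality)
    show "vsub (U (N y)) (N y) \<in> cayley_dom U \<and> Phi U z (vsub (U (N y)) (N y)) = y"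
      using Phi_eq[OF U dense Nl2[OF y]] MN[OF y] Nl2[OF y] by (simp add: M_def cayley_dom_def)
    fix d assume h: "d \<in> cayley_dom U \<and> Phi U z d = y"
    then obtain x where x: "x \<in> l2" "d = vsub (U x) x" unfolding cayley_dom_def by blast
    have "M x = y" using h x Phi_eq[OF U dense x(1)] by (simp add: M_def)
    then have "M x = M (N y)" using MN[OF y] by simp
    then have "x = N y" by (rule IP(1)[OF x(1) Nl2[OF y]])
    then show "d = vsub (U (N y)) (N y)" using x(2) by simp
  qed
  have bN: "bounded_op N" unfolding N_def by (rule IP(4))
  have "bounded_op (op_sub (\<lambda>y. U (N y)) N)"
    by (rule bounded_sub(1)[OF bounded_comp(1)[OF unitary_props(1)[OF U] bN] bN])
  then have "bounded_op (cayley_resolvent U z)"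
    by (rule bounded_op_cong[rotated]) (simp add: Rf)
  then show "z \<in> cayley_resolvent_set U" unfolding res_set_unfold bij_betw_def using inj img by blast
  show "\<forall>y\<in>l2. cayley_resolvent U z y = vsub (U (invop (Mz U z) y)) (invop (Mz U z) y)"
    using Rf by (simp add: N_def M_def)
qed

lemma dist_l2t_eq: "dist X1 X2 = l2norm (vsub (vec_of X1) (vec_of X2))"
  by (simp add: dist_norm norm_l2t.rep_eq minus_l2t.rep_eq vsub_def)

lemma l2norm_vsub_commute: "l2norm (vsub f g) = l2norm (vsub g f)"
proof -
  have "vsub f g = vsmult (-1) (vsub g f)" by (simp add: fun_eq_iff)
  then show ?thesis by (simp add: l2norm_smult)
qed

lemma pert:
  assumes Us: "unitary_op Us" and Ut: "unitary_op Ut"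
    and surj: "\<forall>y\<in>l2. \<exists>x\<in>l2. Mz Us z x = y" and bd: "\<forall>x\<in>l2. l2norm x \<le> K * l2norm (Mz Us z x)"
    and K: "K > 0"
    and small: "cmod (\<i> - z) * opnorm (op_sub Ut Us) * K \<le> 1/2"
  shows "\<forall>y\<in>l2. \<exists>x\<in>l2. Mz Ut z x = y" "\<forall>x\<in>l2. l2norm x \<le> (2*K) * l2norm (Mz Ut z x)"
proof -
  define a where "a = \<i> - z"
  define D where "D = op_sub Ut Us"
  define c where "c = cmod a * opnorm D"
  have bD: "bounded_op D" unfolding D_def by (rule bounded_sub(1)[OF unitary_props(1)[OF Ut] unitary_props(1)[OF Us]])
  have linD: "lin D" by (rule bounded_lin[OF bD])
  have c0: "0 \<le> c" unfolding c_def by (simp add: opnorm_nonneg[OF bD])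
  have cK: "c * K \<le> 1/2" using small by (simp add: c_def a_def D_def)
  have linMs: "lin (Mz Us z)" by (rule lin_Mz[OF unitary_props(2)[OF Us]])
  have dec: "Mz Ut z x = vadd (Mz Us z x) (vsmult a (D x))" for x
    unfolding Mz_def a_def D_def by (simp add: fun_eq_iff algebra_simps)
  have Dx: "l2norm (vsmult a (D x)) \<le> c * l2norm x" if x: "x \<in> l2" for x
  proof -
    have "l2norm (vsmult a (D x)) = cmod a * l2norm (D x)" by (rule l2norm_smult)
    also have "\<dots> \<le> cmod a * (opnorm D * l2norm x)" by (intro mult_left_mono opnorm_le[OF bD x]) simp
    finally show ?thesis by (simp add: c_def mult.assoc)
  qed
  show "\<forall>x\<in>l2. l2norm x \<le> (2*K) * l2norm (Mz Ut z x)"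
  proof
    fix x :: "'a vec" assume x: "x \<in> l2"
    have Msl2: "Mz Us z x \<in> l2" by (rule lin_l2[OF linMs x])
    have aDl2: "vsmult a (D x) \<in> l2" by (simp add: lin_l2[OF linD x])
    have "Mz Us z x = vsub (Mz Ut z x) (vsmult a (D x))" by (simp add: dec fun_eq_iff)
    then have "l2norm (Mz Us z x) \<le> l2norm (Mz Ut z x) + l2norm (vsmult a (D x))"
      using l2norm_sub_le[of "Mz Ut z x" "vsmult a (D x)"] Msl2 aDl2 dec by simp
    also have "\<dots> \<le> l2norm (Mz Ut z x) + c * l2norm x" using Dx[OF x] by simp
    finally have h: "l2norm (Mz Us z x) \<le> l2norm (Mz Ut z x) + c * l2norm x" .
    have "K * l2norm (Mz Us z x) \<le> K * (l2norm (Mz Ut z x) + c * l2norm x)"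
      by (rule mult_left_mono[OF h]) (use K in simp)
    then have "K * l2norm (Mz Us z x) \<le> K * l2norm (Mz Ut z x) + (c * K) * l2norm x"
      by (simp add: algebra_simps)
    moreover have "(c * K) * l2norm x \<le> (1/2) * l2norm x"
      using cK l2norm_nonneg[of x] by (rule mult_right_mono)
    moreover have "l2norm x \<le> K * l2norm (Mz Us z x)" using bd x by blast
    ultimately show "l2norm x \<le> (2*K) * l2norm (Mz Ut z x)" by simp
  qed
  show "\<forall>y\<in>l2. \<exists>x\<in>l2. Mz Ut z x = y"
  proof
    fix y :: "'a vec" assume y: "y \<in> l2"
    define N where "N = invop (Mz Us z)"
    note IP = invop_props[OF linMs surj bd]
    have Nl2: "\<And>u. u \<in> l2 \<Longrightarrow> N u \<in> l2" and MN: "\<And>u. u \<in> l2 \<Longrightarrow> Mz Us z (N u) = u"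
      using IP(2) unfolding N_def by auto
    have linN: "lin N" unfolding N_def by (rule bounded_lin[OF IP(4)])
    have Nb: "\<And>u. u \<in> l2 \<Longrightarrow> l2norm (N u) \<le> K * l2norm u" unfolding N_def by (rule IP(5))
    define u where "u X = vsub y (vsmult a (D (vec_of X)))" for X :: "'a l2t"
    have ul2: "u X \<in> l2" for X unfolding u_def using y lin_l2[OF linD vec_of_in] by simp
    define F where "F X = Abs_l2t (N (u X))" for X
    have lip: "dist (F X1) (F X2) \<le> (1/2) * dist X1 X2" for X1 X2
    proof -
      have "dist (F X1) (F X2) = l2norm (vsub (N (u X1)) (N (u X2)))"
        unfolding dist_l2t_eq F_def using Nl2[OF ul2] by (simp add: Abs_l2t_inverse)
      also have "\<dots> = l2norm (N (vsub (u X1) (u X2)))" by (simp add: lin_sub[OF linN ul2 ul2])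
      also have "\<dots> \<le> K * l2norm (vsub (u X1) (u X2))" by (rule Nb) (simp add: ul2)
      also have "vsub (u X1) (u X2) = vsmult a (D (vsub (vec_of X2) (vec_of X1)))"
        unfolding u_def lin_sub[OF linD vec_of_in vec_of_in] by (simp add: fun_eq_iff algebra_simps)
      also have "l2norm \<dots> \<le> c * l2norm (vsub (vec_of X2) (vec_of X1))" by (rule Dx) simp
      also have "l2norm (vsub (vec_of X2) (vec_of X1)) = dist X1 X2"
        by (simp add: dist_l2t_eq l2norm_vsub_commute)
      finally have "dist (F X1) (F X2) \<le> K * (c * dist X1 X2)" using K by (simp add: mult_left_mono)
      also have "\<dots> = (c * K) * dist X1 X2" by simp
      also have "\<dots> \<le> (1/2) * dist X1 X2" using cK by (rule mult_right_mono) simp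
      finally show ?thesis .
    qed
    have "\<exists>!X. F X = X" by (rule banach_fix_type[of "1/2"]) (use lip in auto)
    then obtain X where FX: "F X = X" by blast
    define x where "x = vec_of X"
    have xe: "x = N (u X)" unfolding x_def using FX[symmetric] Nl2[OF ul2]
      by (metis F_def Abs_l2t_inverse)
    have "Mz Us z x = u X" using MN[OF ul2] xe by simp
    then have "Mz Ut z x = y" unfolding dec u_def x_def by (simp add: fun_eq_iff)
    then show "\<exists>x\<in>l2. Mz Ut z x = y" using vec_of_in[of X] x_def by blast
  qed
qed

lemma alg_id:
  fixes a b P T Y Q S W V1 V2 R :: complex
  assumes "a*P + b*T = Y" "a*Q + b*S = Y" "W = a*V1 + b*P" "W = a*V2 + b*R"
  shows "a*((V1 - P) - (V2 - R)) + b*((P - T) - (Q - S)) = (a+b)*(R - Q)"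
proof -
  have "a*((V1 - P) - (V2 - R)) + b*((P - T) - (Q - S)) - (a+b)*(R - Q)
      = (a*V1 + b*P - W) - (a*V2 + b*R - W) - (a*P + b*T - Y) + (a*Q + b*S - Y)"
    by (simp add: algebra_simps)
  also have "\<dots> = 0" using assms by simp
  finally show ?thesis by simp
qed

lemma diff_identity:
  assumes Us: "unitary_op Us" and Ut: "unitary_op Ut" and y: "y \<in> l2"
    and xs: "xs \<in> l2" and xt: "xt \<in> l2" and es: "Mz Us z xs = y" and et: "Mz Ut z xt = y"
  shows "Mz Ut z (vsub (vsub (Ut xt) xt) (vsub (Us xs) xs)) = vsmult (2 * \<i>) (op_sub Ut Us xs)"
proof -
  have lt: "lin Ut" by (rule unitary_props(2)[OF Ut])
  have Ul2t: "\<And>f. f \<in> l2 \<Longrightarrow> Ut f \<in> l2" by (rule unitary_props(4)[OF Ut])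
  have Ul2s: "\<And>f. f \<in> l2 \<Longrightarrow> Us f \<in> l2" by (rule unitary_props(4)[OF Us])
  define a where "a = \<i> - z"
  define b where "b = \<i> + z"
  have Uw: "Ut (vsub (vsub (Ut xt) xt) (vsub (Us xs) xs)) = vsub (vsub (Ut (Ut xt)) (Ut xt)) (vsub (Ut (Us xs)) (Ut xs))"
    using xs xt Ul2t Ul2s by (simp add: lin_sub[OF lt])
  have Uy1: "Ut y = vadd (vsmult a (Ut (Ut xt))) (vsmult b (Ut xt))"
    using et[symmetric] xt Ul2t by (simp add: Mz_def lin_add[OF lt] lin_smult[OF lt] a_def b_def)
  have Uy2: "Ut y = vadd (vsmult a (Ut (Us xs))) (vsmult b (Ut xs))"
    using es[symmetric] xs Ul2s by (simp add: Mz_def lin_add[OF lt] lin_smult[OF lt] a_def b_def)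
  show ?thesis
  proof (rule ext)
    fix i
    have e1: "a * Ut xt i + b * xt i = y i" using et by (simp add: Mz_def a_def b_def fun_eq_iff)
    have e2: "a * Us xs i + b * xs i = y i" using es by (simp add: Mz_def a_def b_def fun_eq_iff)
    have e3: "Ut y i = a * Ut (Ut xt) i + b * Ut xt i" using Uy1 by simp
    have e4: "Ut y i = a * Ut (Us xs) i + b * Ut xs i" using Uy2 by simp
    have ab: "a + b = 2 * \<i>" by (simp add: a_def b_def)
    have "Mz Ut z (vsub (vsub (Ut xt) xt) (vsub (Us xs) xs)) i
        = a * ((Ut (Ut xt) i - Ut xt i) - (Ut (Us xs) i - Ut xs i)) + b * ((Ut xt i - xt i) - (Us xs i - xs i))"
      by (simp add: Mz_def Uw a_def b_def)
    also have "\<dots> = (a + b) * (Ut xs i - Us xs i)"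
      by (rule alg_id[OF e1 e2 e3 e4])
    finally show "Mz Ut z (vsub (vsub (Ut xt) xt) (vsub (Us xs) xs)) i = vsmult (2 * \<i>) (op_sub Ut Us xs) i"
      by (simp add: ab)
  qed
qed

lemma local_step:
  assumes p: "0 < p" and Us: "unitary_op Us" and Ut: "unitary_op Ut"
    and ds: "dense_in_l2 (cayley_dom Us)" and dt: "dense_in_l2 (cayley_dom Ut)"
    and S: "schatten p (op_sub Ut Us)"
    and surj: "\<forall>y\<in>l2. \<exists>x\<in>l2. Mz Us z x = y" and bd: "\<forall>x\<in>l2. l2norm x \<le> K * l2norm (Mz Us z x)"
    and K: "K > 0"
    and small: "cmod (\<i> - z) * opnorm (op_sub Ut Us) * K \<le> 1/2"
  shows "z \<in> cayley_resolvent_set Ut"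
    "schatten p (op_sub (cayley_resolvent Ut z) (cayley_resolvent Us z))"
    "snorm p (op_sub (cayley_resolvent Ut z) (cayley_resolvent Us z)) \<le> (4 * K * K) * snorm p (op_sub Ut Us)"
proof -
  note P = pert[OF Us Ut surj bd K small]
  show "z \<in> cayley_resolvent_set Ut" by (rule res_t(1)[OF Ut dt P(1) P(2)])
  have Rt: "\<forall>y\<in>l2. cayley_resolvent Ut z y = vsub (Ut (invop (Mz Ut z) y)) (invop (Mz Ut z) y)"
    by (rule res_t(2)[OF Ut dt P(1) P(2)])
  have Rs: "\<forall>y\<in>l2. cayley_resolvent Us z y = vsub (Us (invop (Mz Us z) y)) (invop (Mz Us z) y)"
    by (rule res_t(2)[OF Us ds surj bd])
  have linMs: "lin (Mz Us z)" by (rule lin_Mz[OF unitary_props(2)[OF Us]])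
  have linMt: "lin (Mz Ut z)" by (rule lin_Mz[OF unitary_props(2)[OF Ut]])
  note IPs = invop_props[OF linMs surj bd]
  note IPt = invop_props[OF linMt P(1) P(2)]
  define Ns where "Ns = invop (Mz Us z)"
  define Nt where "Nt = invop (Mz Ut z)"
  have bNs: "bounded_op Ns" unfolding Ns_def by (rule IPs(4))
  have bNt: "bounded_op Nt" unfolding Nt_def by (rule IPt(4))
  have oNs: "opnorm Ns \<le> K" unfolding Ns_def by (rule opnorm_least) (use IPs(5) K in auto)
  have oNt: "opnorm Nt \<le> 2 * K" unfolding Nt_def by (rule opnorm_least) (use IPt(5) K in auto)
  define A where "A = (\<lambda>v. vsmult (2 * \<i>) (Nt v))"
  have bA: "bounded_op A" unfolding A_def by (rule bounded_scal(1)[OF bNt])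
  have oA: "opnorm A \<le> 4 * K"
  proof -
    have "opnorm A \<le> cmod (2 * \<i>) * opnorm Nt" unfolding A_def by (rule bounded_scal(2)[OF bNt])
    also have "\<dots> \<le> 2 * (2 * K)" using oNt by (simp add: norm_mult)
    finally show ?thesis by simp
  qed
  have eq: "\<forall>y\<in>l2. op_sub (cayley_resolvent Ut z) (cayley_resolvent Us z) y = A (op_sub Ut Us (Ns y))"
  proof
    fix y :: "'a vec" assume y: "y \<in> l2"
    define xs where "xs = Ns y"
    define xt where "xt = Nt y"
    have xs: "xs \<in> l2" "Mz Us z xs = y" using IPs(2)[OF y] by (simp_all add: xs_def Ns_def)
    have xt: "xt \<in> l2" "Mz Ut z xt = y" using IPt(2)[OF y] by (simp_all add: xt_def Nt_def)
    have Ul2t: "\<And>f. f \<in> l2 \<Longrightarrow> Ut f \<in> l2" by (rule unitary_props(4)[OF Ut])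
    have Ul2s: "\<And>f. f \<in> l2 \<Longrightarrow> Us f \<in> l2" by (rule unitary_props(4)[OF Us])
    define w where "w = vsub (vsub (Ut xt) xt) (vsub (Us xs) xs)"
    have wl2: "w \<in> l2" unfolding w_def using xs xt Ul2t Ul2s by simp
    have Mw: "Mz Ut z w = vsmult (2 * \<i>) (op_sub Ut Us xs)"
      unfolding w_def by (rule diff_identity[OF Us Ut y xs(1) xt(1) xs(2) xt(2)])
    have Dl2: "op_sub Ut Us xs \<in> l2" using xs Ul2t Ul2s by simp
    have "w = Nt (Mz Ut z w)" unfolding Nt_def by (rule IPt(3)[OF wl2, symmetric])
    also have "\<dots> = vsmult (2 * \<i>) (Nt (op_sub Ut Us xs))"
      unfolding Mw by (rule lin_smult[OF bounded_lin[OF bNt] Dl2])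
    finally have "w = A (op_sub Ut Us xs)" by (simp add: A_def)
    moreover have "op_sub (cayley_resolvent Ut z) (cayley_resolvent Us z) y = w"
      using Rt Rs y by (simp add: w_def xs_def xt_def Ns_def Nt_def)
    ultimately show "op_sub (cayley_resolvent Ut z) (cayley_resolvent Us z) y = A (op_sub Ut Us (Ns y))"
      by (simp add: xs_def)
  qed
  note SC = schatten_comp[OF p bA S bNs eq]
  show "schatten p (op_sub (cayley_resolvent Ut z) (cayley_resolvent Us z))" by (rule SC(1))
  have "snorm p (op_sub (cayley_resolvent Ut z) (cayley_resolvent Us z)) \<le> opnorm A * opnorm Ns * snorm p (op_sub Ut Us)"
    by (rule SC(2))
  also have "\<dots> \<le> (4 * K) * K * snorm p (op_sub Ut Us)"
    by (intro mult_right_mono mult_mono oA oNs opnorm_nonneg bNs snorm_nonneg) (use K in simp)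
  finally show "snorm p (op_sub (cayley_resolvent Ut z) (cayley_resolvent Us z)) \<le> (4 * K * K) * snorm p (op_sub Ut Us)"
    by simp
qed

theorem mainTheorem17:
  fixes p :: real and I :: "real set" and U :: "real \<Rightarrow> ('i::countable) op"
  assumes "1 \<le> p"
    and "\<forall>t\<in>I. U t \<in> U_p p"
    and "\<forall>s\<in>I. ((\<lambda>t. snorm p (op_sub (U t) (U s))) \<longlongrightarrow> 0) (at s within I)"
    and "\<forall>t\<in>I. dense_in_l2 (cayley_dom (U t))"
  shows "\<forall>s\<in>I. \<forall>z. z \<notin> cayley_spec (U s) \<longrightarrow>
           (\<forall>\<^sub>F t in at s within I. z \<notin> cayley_spec (U t) \<and>
               schatten p (op_sub (cayley_resolvent (U t) z) (cayley_resolvent (U s) z))) \<and>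
           ((\<lambda>t. snorm p (op_sub (cayley_resolvent (U t) z) (cayley_resolvent (U s) z)))
              \<longlongrightarrow> 0) (at s within I)"
proof (intro ballI allI impI)
  fix s z assume sI: "s \<in> I" and zs: "z \<notin> cayley_spec (U s)"
  have zr: "z \<in> cayley_resolvent_set (U s)" using zs by (simp add: cayley_spec_def)
  have p0: "0 < p" using assms(1) by simp
  have Uu: "\<And>t. t \<in> I \<Longrightarrow> unitary_op (U t)" using assms(2) by (simp add: U_p_def)
  have Uid: "\<And>t. t \<in> I \<Longrightarrow> schatten p (op_sub (U t) id)" using assms(2) by (simp add: U_p_def)
  have dn: "\<And>t. t \<in> I \<Longrightarrow> dense_in_l2 (cayley_dom (U t))" using assms(4) by simp
  have surj: "\<forall>y\<in>l2. \<exists>x\<in>l2. Mz (U s) z x = y" by (rule res_s(1)[OF Uu[OF sI] dn[OF sI] zr])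
  obtain K where K: "K > 0" and bd: "\<forall>x\<in>l2. l2norm x \<le> K * l2norm (Mz (U s) z x)"
    using res_s(2)[OF Uu[OF sI] dn[OF sI] zr] by blast
  have Sch: "schatten p (op_sub (U t) (U s))" if t: "t \<in> I" for t
  proof -
    have "schatten p (op_sub (op_sub (U t) id) (op_sub (U s) id))"
      by (rule schatten_sub) (use p0 Uid[OF t] Uid[OF sI] in auto)
    then show ?thesis by (rule schatten_cong[rotated]) (simp add: fun_eq_iff)
  qed
  define a where "a = \<i> - z"
  define \<delta> where "\<delta> = 1 / (2 * (cmod a + 1) * K)"
  have "0 < 2 * (cmod a + 1) * K" using K by (intro mult_pos_pos) (simp_all add: add_nonneg_pos)
  then have dp: "\<delta> > 0" unfolding \<delta>_def by simp
  have lim: "((\<lambda>t. snorm p (op_sub (U t) (U s))) \<longlongrightarrow> 0) (at s within I)" using assms(3) sI by blast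
  have ev1: "\<forall>\<^sub>F t in at s within I. snorm p (op_sub (U t) (U s)) < \<delta>"
    by (rule order_tendstoD(2)[OF lim dp])
  have ev2: "\<forall>\<^sub>F t in at s within I. t \<in> I" by (simp add: eventually_at_filter)
  have good: "z \<in> cayley_resolvent_set (U t) \<and>
      schatten p (op_sub (cayley_resolvent (U t) z) (cayley_resolvent (U s) z)) \<and>
      snorm p (op_sub (cayley_resolvent (U t) z) (cayley_resolvent (U s) z)) \<le> (4 * K * K) * snorm p (op_sub (U t) (U s))"
    if t: "t \<in> I" and sm: "snorm p (op_sub (U t) (U s)) < \<delta>" for t
  proof -
    have o: "opnorm (op_sub (U t) (U s)) \<le> \<delta>"
      using opnorm_le_snorm[OF p0 Sch[OF t]] sm by simp
    have o0: "0 \<le> opnorm (op_sub (U t) (U s))"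
      by (rule opnorm_nonneg[OF schatten_bounded[OF Sch[OF t]]])
    have "cmod a * opnorm (op_sub (U t) (U s)) * K \<le> cmod a * \<delta> * K"
      using K o by (intro mult_right_mono mult_left_mono) auto
    also have "cmod a * \<delta> * K = cmod a / (2 * (cmod a + 1))"
    proof -
      have "cmod a + 1 > 0" by (rule add_nonneg_pos) simp_all
      then have "2 * (cmod a + 1) > 0" by simp
      then have nz: "2 * (cmod a + 1) \<noteq> 0" by simp
      have "\<delta> * K = 1 / (2 * (cmod a + 1))" unfolding \<delta>_def using K nz by simp
      then show ?thesis by (metis mult.assoc times_divide_eq_right mult_1_right)
    qed
    also have "\<dots> \<le> 1/2"
    proof -
      have pos: "0 < 2 * (cmod a + 1)" by (simp add: add_nonneg_pos)
      show ?thesis by (simp only: pos_divide_le_eq[OF pos]) simp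
    qed
    finally have small: "cmod (\<i> - z) * opnorm (op_sub (U t) (U s)) * K \<le> 1/2" by (simp add: a_def)
    note L = local_step[OF p0 Uu[OF sI] Uu[OF t] dn[OF sI] dn[OF t] Sch[OF t] surj bd K small]
    show ?thesis using L by blast
  qed
  have ev: "\<forall>\<^sub>F t in at s within I. z \<in> cayley_resolvent_set (U t) \<and>
      schatten p (op_sub (cayley_resolvent (U t) z) (cayley_resolvent (U s) z)) \<and>
      snorm p (op_sub (cayley_resolvent (U t) z) (cayley_resolvent (U s) z)) \<le> (4 * K * K) * snorm p (op_sub (U t) (U s))"
    using eventually_conj[OF ev1 ev2] by (rule eventually_mono) (use good in blast)
  show "(\<forall>\<^sub>F t in at s within I. z \<notin> cayley_spec (U t) \<and>
               schatten p (op_sub (cayley_resolvent (U t) z) (cayley_resolvent (U s) z))) \<and>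
           ((\<lambda>t. snorm p (op_sub (cayley_resolvent (U t) z) (cayley_resolvent (U s) z)))
              \<longlongrightarrow> 0) (at s within I)"
  proof
    show "\<forall>\<^sub>F t in at s within I. z \<notin> cayley_spec (U t) \<and>
               schatten p (op_sub (cayley_resolvent (U t) z) (cayley_resolvent (U s) z))"
      using ev by (rule eventually_mono) (simp add: cayley_spec_def)
    have up: "((\<lambda>t. (4 * K * K) * snorm p (op_sub (U t) (U s))) \<longlongrightarrow> 0) (at s within I)"
      using tendsto_mult[OF tendsto_const lim, of "4 * K * K"] by simp
    show "((\<lambda>t. snorm p (op_sub (cayley_resolvent (U t) z) (cayley_resolvent (U s) z))) \<longlongrightarrow> 0) (at s within I)"
    proof (rule tendsto_sandwich[OF _ _ tendsto_const up])
      show "\<forall>\<^sub>F t in at s within I. 0 \<le> snorm p (op_sub (cayley_resolvent (U t) z) (cayley_resolvent (U s) z))"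
        by (simp add: snorm_nonneg)
      show "\<forall>\<^sub>F t in at s within I. snorm p (op_sub (cayley_resolvent (U t) z) (cayley_resolvent (U s) z)) \<le> (4 * K * K) * snorm p (op_sub (U t) (U s))"
        using ev by (rule eventually_mono) blast
    qed
  qed
qed

end
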